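(* Let $n\ge3$, $k\ge2$ and $-(n-2)<q<0$. Then the operator \[ T_0=\frac{d^2}{ds^2}+(n-2)\frac{\dot\phi(s)}{\phi(s)}\frac{d}{ds}+\frac{n(n-1)}{\phi(s)^{2n-2}} \] is an isomorphism (bounded, bijective, with bounded inverse) from $\mathscr{C}^k_q(\mathbb{R})$ onto $\mathscr{C}^{k-2}_q(\mathbb{R})$.
   Context: $\phi(s)=(\cosh((n-1)s))^{1/(n-1)}$ and $\dot\phi=d\phi/ds$. For an integer $k\ge0$ and $q\in\mathbb{R}$, $\mathscr{C}^k_q(\mathbb{R})$ is the Banach space of $C^k$ functions $f:\mathbb{R}\to\mathbb{R}$ with finite norm $\|f\|_{\mathscr{C}^k_q}=\sum_{a=0}^k\sup_{s\in\mathbb{R}}|f^{(a)}(s)|\,\phi(s)^{-q}$. *)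

theory Defs
  imports "HOL-Analysis.Analysis"
begin

definition phi :: "nat \<Rightarrow> real \<Rightarrow> real" where
  "phi n s = (cosh (real (n - 1) * s)) powr (1 / real (n - 1))"

definition Ck :: "nat \<Rightarrow> (real \<Rightarrow> real) \<Rightarrow> bool" where
  "Ck k f \<longleftrightarrow> (\<forall>a<k. (deriv ^^ a) f differentiable_on UNIV)
                \<and> continuous_on UNIV ((deriv ^^ k) f)"

definition Cspace :: "nat \<Rightarrow> nat \<Rightarrow> real \<Rightarrow> (real \<Rightarrow> real) set" where
  "Cspace n k q = {f. Ck k f \<and>
     (\<forall>a\<le>k. bdd_above (range (\<lambda>s. \<bar>(deriv ^^ a) f s\<bar> * phi n s powr (-q))))}"

definition Cnorm :: "nat \<Rightarrow> nat \<Rightarrow> real \<Rightarrow> (real \<Rightarrow> real) \<Rightarrow> real" where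
  "Cnorm n k q f = (\<Sum>a\<le>k. (SUP s. \<bar>(deriv ^^ a) f s\<bar> * phi n s powr (-q)))"

definition T0 :: "nat \<Rightarrow> (real \<Rightarrow> real) \<Rightarrow> real \<Rightarrow> real" where
  "T0 n f s = (deriv ^^ 2) f s
      + real (n - 2) * (deriv (phi n) s / phi n s) * deriv f s
      + real n * real (n - 1) / phi n s ^ (2 * n - 2) * f s"

end

theory Submission
  imports Defs "HOL-Computational_Algebra.Polynomial"
begin

definition tt :: "real \<Rightarrow> real \<Rightarrow> real" where "tt m x = tanh (m*x)"
definition QQ :: "real \<Rightarrow> real \<Rightarrow> real" where "QQ m x = cosh (m*x) powr (-((m-1)/m))"
definition PP :: "real \<Rightarrow> real \<Rightarrow> real" where "PP m x = cosh (m*x) powr ((m-1)/m)"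

lemma cosh_pos': "cosh (x::real) > 0" using cosh_real_ge_1[of x] by linarith

lemma tt_deriv: "((tt m) has_real_derivative (m * (1 - tt m x ^2))) (at x)"
  unfolding tt_def by (auto intro!: derivative_eq_intros simp: cosh_pos')

lemma cpow_deriv:
  fixes m r :: real
  shows "((\<lambda>x. cosh (m*x) powr r) has_real_derivative (r * m * tt m x * cosh (m*x) powr r)) (at x)"
proof -
  have d: "((\<lambda>x. cosh (m*x)) has_real_derivative (sinh (m*x) * m)) (at x)"
    by (auto intro!: derivative_eq_intros)
  have "((\<lambda>x. cosh (m*x) powr r) has_real_derivative r * cosh (m*x) powr (r - of_nat 1) * (sinh (m*x) * m)) (at x)"
    by (rule DERIV_fun_powr[OF d cosh_pos'])
  moreover have "r * cosh (m*x) powr (r - of_nat 1) * (sinh (m*x) * m) = r * m * tt m x * cosh (m*x) powr r"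
    using cosh_pos'[of "m*x"] by (simp add: powr_diff tt_def tanh_def field_simps)
  ultimately show ?thesis using DERIV_cong by metis
qed

lemma QQ_deriv: "m \<noteq> 0 \<Longrightarrow> ((QQ m) has_real_derivative (-(m-1) * tt m x * QQ m x)) (at x)"
  unfolding QQ_def by (rule DERIV_cong[OF cpow_deriv[of m "-((m-1)/m)" x]]) (simp add: field_simps)

lemma PP_deriv: "m \<noteq> 0 \<Longrightarrow> ((PP m) has_real_derivative ((m-1) * tt m x * PP m x)) (at x)"
  unfolding PP_def by (rule DERIV_cong[OF cpow_deriv[of m "((m-1)/m)" x]]) (simp add: field_simps)

lemma PQ: "PP m x * QQ m x = 1"
  unfolding PP_def QQ_def using cosh_pos'[of "m*x"] by (simp add: powr_minus field_simps)

lemma QQ_even: "QQ m (-x) = QQ m x" unfolding QQ_def by simp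
lemma PP_even: "PP m (-x) = PP m x" unfolding PP_def by simp
lemma tt_odd: "tt m (-x) = - tt m x" unfolding tt_def by simp
lemma tt_bound: "\<bar>tt m x\<bar> \<le> 1" unfolding tt_def using tanh_real_bounds[of "m*x"] by auto
lemma tt_sq: "tt m x ^ 2 \<le> 1" using tt_bound[of m x] by (simp add: abs_square_le_1)




lemma cosh_exp_lower: "exp \<bar>x\<bar> / 2 \<le> cosh (x::real)"
proof -
  have "exp (-x) > 0" "exp x > 0" by auto
  then show ?thesis unfolding cosh_def by (cases "x \<ge> 0") auto
qed

lemma cosh_exp_upper: "cosh (x::real) \<le> exp \<bar>x\<bar>"
proof (cases "x \<ge> 0")
  case True
  then have "exp (-x) \<le> exp x" by simp
  then show ?thesis using True unfolding cosh_def by auto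
next
  case False
  then have "exp x \<le> exp (-x)" by simp
  then show ?thesis using False unfolding cosh_def by auto
qed

lemma two_powr_le: "0 \<le> r \<Longrightarrow> r \<le> 1 \<Longrightarrow> (2::real) powr r \<le> 2"
  using powr_mono[of r 1 2] by simp

lemma cpow_upper:
  fixes m r x :: real
  assumes "m > 0" "r \<ge> 0"
  shows "cosh (m*x) powr r \<le> exp (r*m*\<bar>x\<bar>)"
proof -
  have "cosh (m*x) powr r \<le> exp \<bar>m*x\<bar> powr r"
    by (rule powr_mono2) (use assms cosh_exp_upper cosh_pos' in \<open>auto intro: less_imp_le\<close>)
  also have "\<dots> = exp (r*m*\<bar>x\<bar>)" using assms by (simp add: exp_powr_real abs_mult)
  finally show ?thesis .
qed

lemma cpow_lower:
  fixes m r x :: real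
  assumes "m > 0" "r \<ge> 0" "r \<le> 1"
  shows "exp (r*m*\<bar>x\<bar>) / 2 \<le> cosh (m*x) powr r"
proof -
  have "(exp \<bar>m*x\<bar> / 2) powr r \<le> cosh (m*x) powr r"
    by (rule powr_mono2) (use assms cosh_exp_lower in \<open>auto\<close>)
  moreover have "(exp \<bar>m*x\<bar> / 2) powr r = exp (r*m*\<bar>x\<bar>) / 2 powr r"
    using assms by (simp add: powr_divide exp_powr_real abs_mult)
  moreover have "exp (r*m*\<bar>x\<bar>) / 2 \<le> exp (r*m*\<bar>x\<bar>) / 2 powr r"
    using two_powr_le[OF assms(2,3)] by (intro divide_left_mono) auto
  ultimately show ?thesis by linarith
qed

lemma cpow_neg_upper:
  fixes m r x :: real
  assumes "m > 0" "r \<ge> 0" "r \<le> 1"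
  shows "cosh (m*x) powr (-r) \<le> 2 * exp (-(r*m*\<bar>x\<bar>))"
proof -
  have "cosh (m*x) powr (-r) = inverse (cosh (m*x) powr r)" by (simp add: powr_minus)
  also have "\<dots> \<le> inverse (exp (r*m*\<bar>x\<bar>) / 2)"
    using cpow_lower[OF assms, of x] by (intro le_imp_inverse_le) auto
  also have "\<dots> = 2 * exp (-(r*m*\<bar>x\<bar>))" by (simp add: exp_minus field_simps)
  finally show ?thesis .
qed

lemma cpow_neg_lower:
  fixes m r x :: real
  assumes "m > 0" "r \<ge> 0"
  shows "exp (-(r*m*\<bar>x\<bar>)) \<le> cosh (m*x) powr (-r)"
proof -
  have "exp (-(r*m*\<bar>x\<bar>)) = inverse (exp (r*m*\<bar>x\<bar>))" by (simp add: exp_minus)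
  also have "\<dots> \<le> inverse (cosh (m*x) powr r)"
    using cpow_upper[OF assms, of x] cosh_pos'[of "m*x"] by (intro le_imp_inverse_le) auto
  also have "\<dots> = cosh (m*x) powr (-r)" by (simp add: powr_minus)
  finally show ?thesis .
qed

lemma QQ_pos: "QQ m x > 0" unfolding QQ_def using cosh_pos'[of "m*x"] by simp
lemma PP_pos: "PP m x > 0" unfolding PP_def using cosh_pos'[of "m*x"] by simp

lemma QQ_upper: "m > 1 \<Longrightarrow> QQ m x \<le> 2 * exp (-((m-1)*\<bar>x\<bar>))"
  unfolding QQ_def using cpow_neg_upper[of m "(m-1)/m" x] by simp
lemma QQ_lower: "m > 1 \<Longrightarrow> exp (-((m-1)*\<bar>x\<bar>)) \<le> QQ m x"
  unfolding QQ_def using cpow_neg_lower[of m "(m-1)/m" x] by simp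
lemma QQ_le1: "m > 1 \<Longrightarrow> QQ m x \<le> 1"
proof -
  assume "m > 1"
  then have "1 \<le> cosh (m*x) powr ((m-1)/m)" using cosh_real_ge_1[of "m*x"] by (intro ge_one_powr_ge_zero) auto
  then show ?thesis unfolding QQ_def by (simp add: powr_minus inverse_le_1_iff)
qed
lemma PP_upper: "m > 1 \<Longrightarrow> PP m x \<le> exp ((m-1)*\<bar>x\<bar>)"
  unfolding PP_def using cpow_upper[of m "(m-1)/m" x] by simp

lemma negl_Int_ivl: "negligible ({a..x} \<inter> {x::real..})"
proof -
  have "{a..x} \<inter> {x::real..} \<subseteq> {x}" by auto
  then show ?thesis by (rule negligible_subset[OF negligible_sing])
qed

lemma tail_int_pos:
  fixes F :: "real \<Rightarrow> real"
  assumes cont: "continuous_on UNIV F" and ee: "ee > 0"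
    and bnd: "\<And>x. x \<ge> 0 \<Longrightarrow> \<bar>F x\<bar> \<le> D * exp (-ee*x)" and s: "s \<ge> 0"
  shows "F integrable_on {s..}" "abs (integral {s..} F) \<le> D * (exp (-ee* s) / ee)"
proof -
  have gi: "((\<lambda>x. D * exp (-ee*x)) has_integral D * (exp (-ee* s)/ee)) {s..}"
    by (rule has_integral_mult_right[OF has_integral_exp_minus_to_infinity[OF ee]])
  have meas: "F \<in> borel_measurable (lebesgue_on {s..})"
    by (rule continuous_imp_measurable_on_sets_lebesgue) (use cont continuous_on_subset in auto)
  show fi: "F integrable_on {s..}"
    by (rule measurable_bounded_by_integrable_imp_integrable_real[OF meas _ _])
       (use gi bnd s in \<open>auto simp: integrable_on_def\<close>)
  have "abs (integral {s..} F) \<le> integral {s..} (\<lambda>x. D * exp (-ee*x))"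
    using integral_norm_bound_integral[OF fi, of "\<lambda>x. D * exp (-ee*x)"] gi bnd s
    by (auto simp: integrable_on_def)
  also have "\<dots> = D * (exp (-ee* s) / ee)" using integral_unique[OF gi] by simp
  finally show "abs (integral {s..} F) \<le> D * (exp (-ee* s) / ee)" .
qed

lemma tail_int:
  fixes F :: "real \<Rightarrow> real"
  assumes cont: "continuous_on UNIV F" and ee: "ee > 0"
    and bnd: "\<And>x. x \<ge> 0 \<Longrightarrow> \<bar>F x\<bar> \<le> D * exp (-ee*x)"
  shows "F integrable_on {s..}"
proof (cases "s \<ge> 0")
  case True then show ?thesis using tail_int_pos[OF assms] by auto
next
  case False
  have "F integrable_on {s..0}"
    by (rule integrable_continuous_interval) (use cont continuous_on_subset in auto)
  moreover have "F integrable_on {0..}" using tail_int_pos[OF assms, of 0] by auto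
  ultimately show ?thesis
    by (rule integrable_Un'[OF _ _ negl_Int_ivl]) (use False in auto)
qed

lemma tail_split:
  fixes F :: "real \<Rightarrow> real"
  assumes cont: "continuous_on UNIV F" and ee: "ee > 0"
    and bnd: "\<And>x. x \<ge> 0 \<Longrightarrow> \<bar>F x\<bar> \<le> D * exp (-ee*x)" and bx: "b \<le> x"
  shows "integral {b..} F = integral {b..x} F + integral {x..} F"
proof -
  have "F integrable_on {b..x}"
    by (rule integrable_continuous_interval) (use cont continuous_on_subset in auto)
  moreover have "{b..} = {b..x} \<union> {x..}" using bx by auto
  ultimately show ?thesis using integral_Un[OF _ tail_int[OF assms(1-3)] negl_Int_ivl] by metis
qed

lemma tail_deriv:
  fixes F :: "real \<Rightarrow> real"
  assumes cont: "continuous_on UNIV F" and ee: "ee > 0"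
    and bnd: "\<And>x. x \<ge> 0 \<Longrightarrow> \<bar>F x\<bar> \<le> D * exp (-ee*x)"
  shows "((\<lambda>s. integral {s..} F) has_real_derivative -F s) (at s)"
proof -
  define b where "b = s - 1"
  have "((\<lambda>x. integral {b..x} F) has_real_derivative F s) (at s within {b..s+1})"
    by (rule integral_has_real_derivative) (use cont continuous_on_subset b_def in auto)
  moreover have "at s within {b..s+1} = at s"
    by (rule at_within_interior) (simp add: b_def)
  ultimately have d: "((\<lambda>x. integral {b..x} F) has_real_derivative F s) (at s)" by simp
  have "((\<lambda>x. integral {b..} F - integral {b..x} F) has_real_derivative (0 - F s)) (at s)"
    by (rule DERIV_diff[OF DERIV_const d])
  then have "((\<lambda>x. integral {b..} F - integral {b..x} F) has_real_derivative (- F s)) (at s)" by simp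
  then show ?thesis
  proof (rule has_field_derivative_transform_within_open[of _ _ _ "{b<..}"])
    fix x assume "x \<in> {b<..}"
    then show "integral {b..} F - integral {b..x} F = integral {x..} F"
      using tail_split[OF assms, of b x] by simp
  qed (auto simp: b_def)
qed


lemma fin_int_bound:
  fixes ee s :: real
  assumes "ee > 0" "s \<le> 0"
  shows "integral {s..0} (\<lambda>x. exp (-ee*x)) \<le> exp (-ee * s)/ee"
proof -
  have d: "((\<lambda>x. - exp (-ee*x) / ee) has_vector_derivative exp (-ee*x)) (at x within {s..0})" for x
  proof -
    have "((\<lambda>x. - exp (-ee*x) / ee) has_real_derivative exp (-ee*x)) (at x)"
      using assms by (auto intro!: derivative_eq_intros)
    then show ?thesis by (simp add: has_real_derivative_iff_has_vector_derivative[symmetric] has_field_derivative_at_within)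
  qed
  have "((\<lambda>x. exp (-ee*x)) has_integral ((-exp(-ee*0)/ee) - (-exp (-ee * s)/ee))) {s..0}"
    apply (rule fundamental_theorem_of_calculus) using assms apply simp using d apply blast done
  then have "integral {s..0} (\<lambda>x. exp (-ee*x)) = (-exp(-ee*0)/ee) - (-exp (-ee * s)/ee)"
    by (rule integral_unique)
  moreover have "(-exp(-ee*0)/ee) - (-exp (-ee * s)/ee) \<le> exp (-ee * s)/ee" using assms by (simp add: field_simps)
  ultimately show ?thesis by linarith
qed

lemmas tt_deriv' [derivative_intros] = tt_deriv[THEN DERIV_chain2]

lemma QQ_cont: "m \<noteq> 0 \<Longrightarrow> continuous_on UNIV (QQ m)"
  by (meson DERIV_continuous QQ_deriv continuous_at_imp_continuous_on)
lemma PP_cont: "m \<noteq> 0 \<Longrightarrow> continuous_on UNIV (PP m)"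
  by (meson DERIV_continuous PP_deriv continuous_at_imp_continuous_on)
lemma tt_cont: "continuous_on UNIV (tt m)"
  by (meson DERIV_continuous tt_deriv continuous_at_imp_continuous_on)

definition RR :: "real \<Rightarrow> real \<Rightarrow> real" where "RR m s = integral {s..} (QQ m)"
definition TT :: "real \<Rightarrow> real" where "TT m = 2 * RR m 0"

context fixes m :: real assumes m1: "m > 1"
begin

lemma QQ_bnd0: "x \<ge> 0 \<Longrightarrow> \<bar>QQ m x\<bar> \<le> 2 * exp (-(m-1)*x)"
  using QQ_upper[OF m1, of x] QQ_pos[of m x] by (simp only: minus_mult_left abs_of_nonneg abs_of_pos)

lemma m0: "m \<noteq> 0" using m1 by simp
lemma a0: "m - 1 > 0" using m1 by simp

lemma QQ_int: "QQ m integrable_on {s..}"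
  by (rule tail_int[OF QQ_cont[OF m0] a0 QQ_bnd0])

lemma RR_deriv: "((RR m) has_real_derivative - QQ m s) (at s)"
  unfolding RR_def[abs_def] by (rule tail_deriv[OF QQ_cont[OF m0] a0 QQ_bnd0])

lemma RR_nonneg: "RR m s \<ge> 0"
  unfolding RR_def by (rule integral_nonneg[OF QQ_int]) (use QQ_pos less_imp_le in auto)

lemma RR_bnd0: "s \<ge> 0 \<Longrightarrow> RR m s \<le> 2 * (exp (-(m-1) * s)/(m-1))"
  unfolding RR_def using tail_int_pos(2)[OF QQ_cont[OF m0] a0 QQ_bnd0, of s] by simp

lemma RR_0_lower: "RR m 0 \<ge> 1/(m-1)"
proof -
  have gi: "((\<lambda>x. exp (-(m-1)*x)) has_integral exp (-(m-1)*0)/(m-1)) {0..}"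
    by (rule has_integral_exp_minus_to_infinity[OF a0])
  have "integral {0..} (\<lambda>x. exp (-(m-1)*x)) \<le> integral {0..} (QQ m)"
  proof (rule integral_le)
    fix x :: real assume "x \<in> {0..}"
    then show "exp (-(m-1)*x) \<le> QQ m x" using QQ_lower[OF m1, of x] by (simp only: minus_mult_left abs_of_nonneg atLeast_iff)
  qed (use gi QQ_int in \<open>auto simp: integrable_on_def\<close>)
  then show ?thesis unfolding RR_def using integral_unique[OF gi] by simp
qed

lemma TT_pos: "TT m > 0" unfolding TT_def using RR_0_lower a0
  by (smt (verit, best) divide_pos_pos)

lemma RR_sym: "RR m s + RR m (-s) = TT m"
proof -
  have "\<forall>x. ((\<lambda>s. RR m s + RR m (-s)) has_real_derivative 0) (at x)"
  proof
    fix x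
    have "((\<lambda>s. RR m s + RR m (-s)) has_real_derivative (- QQ m x + (- QQ m (-x)) * (-1))) (at x)"
      by (intro DERIV_add RR_deriv DERIV_chain2[OF RR_deriv] DERIV_minus DERIV_ident)
    then show "((\<lambda>s. RR m s + RR m (-s)) has_real_derivative 0) (at x)" by (simp add: QQ_even)
  qed
  from DERIV_isconst_all[OF this, of s 0] show ?thesis by (simp add: TT_def)
qed

lemma RR_le_TT: "RR m s \<le> TT m" using RR_sym[of s] RR_nonneg[of "-s"] by linarith

end

definition HH :: "real \<Rightarrow> real \<Rightarrow> real" where
  "HH m x = - tt m x * RR m x - QQ m x"
definition H1 :: "real \<Rightarrow> real \<Rightarrow> real" where
  "H1 m x = - m * (1 - tt m x ^ 2) * RR m x + m * tt m x * QQ m x"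
definition H2 :: "real \<Rightarrow> real \<Rightarrow> real" where
  "H2 m x = 2 * m^2 * tt m x * (1 - tt m x ^ 2) * RR m x + m * (m+1) * (1 - tt m x ^ 2) * QQ m x
     - m * (m-1) * tt m x ^ 2 * QQ m x"

context fixes m :: real assumes m1: "m > 1"
begin

lemmas dintros = DERIV_diff DERIV_add DERIV_mult' DERIV_minus DERIV_const DERIV_power tt_deriv
   RR_deriv[OF m1] QQ_deriv[OF m0[OF m1]] PP_deriv[OF m0[OF m1]]

lemma HH_deriv: "((HH m) has_real_derivative H1 m x) (at x)"
  unfolding HH_def[abs_def] H1_def
  apply (rule DERIV_cong)
  apply (rule dintros)+
  apply (simp add: algebra_simps)
  done

lemma H1_deriv: "((H1 m) has_real_derivative H2 m x) (at x)"
  unfolding H1_def[abs_def] H2_def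
  apply (rule DERIV_cong)
  apply (rule dintros)+
  apply (simp add: algebra_simps power2_eq_square)
  done

lemma HH_ode: "H2 m x + (m-1) * tt m x * H1 m x + m*(m+1)*(1 - tt m x^2) * HH m x = 0"
  unfolding HH_def H1_def H2_def by (simp add: algebra_simps power2_eq_square)

lemma wronski: "HH m (-s) * H1 m s + H1 m (-s) * HH m s = m * TT m * QQ m s"
proof -
  have r: "RR m (-s) = TT m - RR m s" using RR_sym[OF m1, of s] by simp
  show ?thesis unfolding HH_def H1_def r tt_odd QQ_even
    by (simp add: algebra_simps power2_eq_square)
qed

definition KH where "KH = 2/(m-1) + 2 + TT m"

lemma KH_pos: "KH > 0" unfolding KH_def using TT_pos[OF m1] a0[OF m1] by (smt (verit) divide_pos_pos)

lemma HH_bnd_aux: "RR m x + QQ m x \<le> KH * (if x \<ge> 0 then exp (-(m-1)*x) else 1)"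
  proof (cases "x \<ge> 0")
    case True
    have "RR m x \<le> 2 / (m-1) * exp (-(m-1)*x)" using RR_bnd0[OF m1 True] by simp
    moreover have "QQ m x \<le> 2 * exp (-(m-1)*x)" using QQ_bnd0[OF m1 True] QQ_pos[of m x] by simp
    moreover have "(2/(m-1) + 2) * exp (-(m-1)*x) \<le> KH * exp (-(m-1)*x)"
      unfolding KH_def using TT_pos[OF m1] by (intro mult_right_mono) auto
    ultimately show ?thesis using True by (simp add: algebra_simps)
  next
    case False
    have "0 < 2/(m-1)" using a0[OF m1] by simp
    then show ?thesis using False RR_le_TT[OF m1, of x] QQ_le1[OF m1, of x] unfolding KH_def
      by (simp only: if_False mult_1_right)
qed


lemma HH_bnd: "\<bar>HH m x\<bar> \<le> KH * (if x \<ge> 0 then exp (-(m-1)*x) else 1)"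
proof -
  have "\<bar>HH m x\<bar> \<le> RR m x + QQ m x"
  proof -
    have "\<bar>tt m x * RR m x\<bar> \<le> RR m x"
      using tt_bound[of m x] RR_nonneg[OF m1, of x] by (simp add: abs_mult mult_left_le_one_le)
    then show ?thesis unfolding HH_def using QQ_pos[of m x] by linarith
  qed
  moreover have "RR m x + QQ m x \<le> KH * (if x \<ge> 0 then exp (-(m-1)*x) else 1)"
    by (rule HH_bnd_aux)
  ultimately show ?thesis by linarith
qed

lemma H1_bnd: "\<bar>H1 m x\<bar> \<le> m * KH * (if x \<ge> 0 then exp (-(m-1)*x) else 1)"
proof -
  have "\<bar>H1 m x\<bar> \<le> m * (RR m x + QQ m x)"
  proof -
    have a: "\<bar>m * (1 - tt m x ^ 2) * RR m x\<bar> \<le> m * RR m x"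
    proof -
      have "0 \<le> 1 - tt m x ^ 2" "1 - tt m x ^ 2 \<le> 1" using tt_sq[of m x] by auto
      then show ?thesis using m1 RR_nonneg[OF m1, of x]
        by (simp add: abs_mult mult_left_le_one_le mult.assoc)
    qed
    have b: "\<bar>m * tt m x * QQ m x\<bar> \<le> m * QQ m x"
      using tt_bound[of m x] QQ_pos[of m x] m1
      by (simp add: abs_mult mult_left_le_one_le mult.assoc)
    show ?thesis unfolding H1_def using a b by (simp add: algebra_simps)
  qed
  moreover have "RR m x + QQ m x \<le> KH * (if x \<ge> 0 then exp (-(m-1)*x) else 1)"
    using HH_bnd_aux by blast
  ultimately show ?thesis using m1
    by (smt (verit) mult_left_mono mult.assoc)
qed

end

definition Bint :: "real \<Rightarrow> (real \<Rightarrow> real) \<Rightarrow> real \<Rightarrow> real" where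
  "Bint m G s = integral {s..} (\<lambda>x. HH m x * PP m x * G x)"
definition Sol :: "real \<Rightarrow> (real \<Rightarrow> real) \<Rightarrow> real \<Rightarrow> real" where
  "Sol m G s = (HH m s * Bint m (\<lambda>x. G (-x)) (-s) + HH m (-s) * Bint m G s) / (m * TT m)"
definition Sol1 :: "real \<Rightarrow> (real \<Rightarrow> real) \<Rightarrow> real \<Rightarrow> real" where
  "Sol1 m G s = (H1 m s * Bint m (\<lambda>x. G (-x)) (-s) - H1 m (-s) * Bint m G s) / (m * TT m)"

context fixes m b G0 :: real and G :: "real \<Rightarrow> real"
  assumes m1: "m > 1" and b0: "b > 0" and bm: "b < m - 1"
    and Gc: "continuous_on UNIV G" and Gb: "\<And>x. \<bar>G x\<bar> \<le> G0 * exp (-b * \<bar>x\<bar>)"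
begin

lemma G00: "G0 \<ge> 0" using Gb[of 0] by (smt (verit) exp_gt_zero mult_nonneg_nonneg zero_le_mult_iff)

lemma HH_cont: "continuous_on UNIV (HH m)"
  by (meson DERIV_continuous HH_deriv[OF m1] continuous_at_imp_continuous_on)
lemma H1_cont: "continuous_on UNIV (H1 m)"
  by (meson DERIV_continuous H1_deriv[OF m1] continuous_at_imp_continuous_on)

lemma F_cont: "continuous_on UNIV (\<lambda>x. HH m x * PP m x * G x)"
  by (intro continuous_intros HH_cont PP_cont Gc) (use m1 in auto)

lemma F_bnd_pos: "x \<ge> 0 \<Longrightarrow> \<bar>HH m x * PP m x * G x\<bar> \<le> KH m * G0 * exp (-b*x)"
proof -
  assume x: "x \<ge> 0"
  have h: "\<bar>HH m x\<bar> \<le> KH m * exp (-(m-1)*x)" using HH_bnd[OF m1, of x] x by simp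
  have p: "\<bar>PP m x\<bar> \<le> exp ((m-1)*x)" using PP_upper[OF m1, of x] PP_pos[of m x] x by simp
  have g: "\<bar>G x\<bar> \<le> G0 * exp (-b*x)" using Gb[of x] x by simp
  have "\<bar>HH m x * PP m x * G x\<bar> \<le> (KH m * exp (-(m-1)*x)) * exp ((m-1)*x) * (G0 * exp (-b*x))"
    unfolding abs_mult by (intro mult_mono h p g) (auto simp: KH_pos[OF m1, THEN less_imp_le] G00)
  also have "\<dots> = KH m * G0 * exp (-b*x)"
  proof -
    have "exp (-(m-1)*x) * exp ((m-1)*x) = 1" by (simp add: mult_exp_exp algebra_simps)
    then show ?thesis by (metis (no_types, lifting) mult.assoc mult.commute mult.left_commute mult_1)
  qed
  finally show ?thesis .
qed

lemma F_bnd_neg: "x \<le> 0 \<Longrightarrow> \<bar>HH m x * PP m x * G x\<bar> \<le> KH m * G0 * exp (-(m-1-b)*x)"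
proof -
  assume x: "x \<le> 0"
  have h: "\<bar>HH m x\<bar> \<le> KH m" using HH_bnd[OF m1, of x] x by (cases "x = 0") auto
  have e: "exp ((m-1)*\<bar>x\<bar>) = exp (-(m-1)*x)" using x by (simp add: abs_of_nonpos algebra_simps)
  have p: "\<bar>PP m x\<bar> \<le> exp (-(m-1)*x)" using PP_upper[OF m1, of x] PP_pos[of m x] e by simp
  have g: "\<bar>G x\<bar> \<le> G0 * exp (b*x)" using Gb[of x] x by simp
  have "\<bar>HH m x * PP m x * G x\<bar> \<le> KH m * exp (-(m-1)*x) * (G0 * exp (b*x))"
    unfolding abs_mult by (intro mult_mono h p g) (auto simp: KH_pos[OF m1, THEN less_imp_le] G00)
  also have "\<dots> = KH m * G0 * exp (-(m-1-b)*x)"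
  proof -
    have "exp (-(m-1)*x) * exp (b*x) = exp (-(m-1-b)*x)" by (simp add: mult_exp_exp algebra_simps)
    then show ?thesis by (metis (no_types, lifting) mult.assoc mult.commute mult.left_commute)
  qed
  finally show ?thesis .
qed

lemma Bint_deriv: "((Bint m G) has_real_derivative - (HH m s * PP m s * G s)) (at s)"
  unfolding Bint_def[abs_def] by (rule tail_deriv[OF F_cont b0 F_bnd_pos])

definition KB where "KB = KH m * (1/b + 1/(m-1-b))"

lemma Bint_bnd: "\<bar>Bint m G s\<bar> \<le> KB * G0 * (if s \<ge> 0 then exp (-b* s) else exp (-(m-1-b)* s))"
proof (cases "s \<ge> 0")
  case True
  have "\<bar>Bint m G s\<bar> \<le> KH m * G0 * (exp (-b * s) / b)"
    unfolding Bint_def by (rule tail_int_pos(2)[OF F_cont b0 F_bnd_pos True])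
  also have "\<dots> \<le> KB * G0 * exp (-b* s)"
  proof -
    have "KH m * (1/b) \<le> KB" unfolding KB_def using KH_pos[OF m1] bm by (intro mult_left_mono) auto
    then have "KH m * (1/b) * (G0 * exp (-b* s)) \<le> KB * (G0 * exp (-b* s))"
      by (intro mult_right_mono) (use G00 in auto)
    then show ?thesis by (simp add: algebra_simps)
  qed
  finally show ?thesis using True by simp
next
  case False
  let ?F = "\<lambda>x. HH m x * PP m x * G x"
  let ?c = "m - 1 - b"
  have c0: "?c > 0" using bm by simp
  have split: "Bint m G s = integral {s..0} ?F + integral {0..} ?F"
    unfolding Bint_def using tail_split[OF F_cont b0 F_bnd_pos, of s 0] False by simp
  have i1: "?F integrable_on {s..0}"
    by (rule integrable_continuous_interval) (use F_cont continuous_on_subset in auto)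
  have i2: "(\<lambda>x. KH m * G0 * exp (-?c*x)) integrable_on {s..0}"
    by (rule integrable_continuous_interval) (auto intro!: continuous_intros)
  have "\<bar>integral {s..0} ?F\<bar> \<le> integral {s..0} (\<lambda>x. KH m * G0 * exp (-?c*x))"
    using integral_norm_bound_integral[OF i1 i2] F_bnd_neg by auto
  also have "\<dots> = KH m * G0 * integral {s..0} (\<lambda>x. exp (-?c*x))" by simp
  also have "\<dots> \<le> KH m * G0 * (exp (-?c* s)/?c)"
    by (rule mult_left_mono[OF fin_int_bound[OF c0]]) (use False G00 KH_pos[OF m1] in auto)
  finally have a: "\<bar>integral {s..0} ?F\<bar> \<le> KH m * G0 * (exp (-?c* s)/?c)" .
  have "\<bar>integral {0..} ?F\<bar> \<le> KH m * G0 * (exp (-b*0)/b)"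
    using tail_int_pos(2)[OF F_cont b0 F_bnd_pos, of 0] by simp
  also have "\<dots> \<le> KH m * G0 * (exp (-?c* s)/b)"
  proof -
    have "-?c \<le> 0" "s \<le> 0" using False c0 by auto
    from mult_nonpos_nonpos[OF this] have "0 \<le> (-?c)* s" .
    then have "exp (-b*0) \<le> exp (-?c* s)" by simp
    then have "exp (-b*0)/b \<le> exp (-?c* s)/b" using b0 by (intro divide_right_mono) auto
    then show ?thesis by (rule mult_left_mono) (use G00 KH_pos[OF m1] in auto)
  qed
  finally have b: "\<bar>integral {0..} ?F\<bar> \<le> KH m * G0 * (exp (-?c* s)/b)" .
  have "\<bar>Bint m G s\<bar> \<le> KH m * G0 * (exp (-?c* s)/?c) + KH m * G0 * (exp (-?c* s)/b)"
    unfolding split using a b by linarith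
  also have "\<dots> = KB * G0 * exp (-?c* s)" unfolding KB_def by (simp add: algebra_simps)
  finally show ?thesis using False by simp
qed

end

lemma HHr_deriv: "m > 1 \<Longrightarrow> ((\<lambda>s. HH m (-s)) has_real_derivative - H1 m (-s)) (at s)"
  using DERIV_chain2[OF HH_deriv DERIV_minus[OF DERIV_ident]] by simp
lemma H1r_deriv: "m > 1 \<Longrightarrow> ((\<lambda>s. H1 m (-s)) has_real_derivative - H2 m (-s)) (at s)"
  using DERIV_chain2[OF H1_deriv DERIV_minus[OF DERIV_ident]] by simp

lemma exp_case1:
  fixes m b s :: real
  shows "(if s \<ge> 0 then exp (-(m-1)* s) else 1) * (if -s \<ge> 0 then exp (-b*(-s)) else exp (-(m-1-b)*(-s)))
     = exp (-b*\<bar>s\<bar>)"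
proof (cases "s > 0")
  case True
  then show ?thesis by (simp add: mult_exp_exp algebra_simps)
next
  case False
  then show ?thesis by (cases "s = 0") (auto simp: algebra_simps)
qed

lemma exp_case2:
  fixes m b s :: real
  shows "(if -s \<ge> 0 then exp (-(m-1)*(-s)) else 1) * (if s \<ge> 0 then exp (-b* s) else exp (-(m-1-b)* s))
     = exp (-b*\<bar>s\<bar>)"
proof (cases "s < 0")
  case True
  then show ?thesis by (simp add: mult_exp_exp algebra_simps)
next
  case False
  then show ?thesis by (cases "s = 0") (auto simp: algebra_simps)
qed

context fixes m b G0 :: real and G :: "real \<Rightarrow> real"
  assumes m1: "m > 1" and b0: "b > 0" and bm: "b < m - 1"
    and Gc: "continuous_on UNIV G" and Gb: "\<And>x. \<bar>G x\<bar> \<le> G0 * exp (-b * \<bar>x\<bar>)"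
begin

lemma Grc: "continuous_on UNIV (\<lambda>x. G (-x))"
  by (rule continuous_on_compose2[OF Gc]) (auto intro!: continuous_intros)
lemma Grb: "\<bar>G (-x)\<bar> \<le> G0 * exp (-b * \<bar>x\<bar>)" using Gb[of "-x"] by simp

lemmas BintG = Bint_deriv[OF m1 b0 bm Gc Gb] Bint_bnd[OF m1 b0 bm Gc Gb]
lemmas BintGr = Bint_deriv[OF m1 b0 bm Grc Grb] Bint_bnd[OF m1 b0 bm Grc Grb]

lemma A_deriv: "((\<lambda>s. Bint m (\<lambda>x. G (-x)) (-s)) has_real_derivative HH m (-s) * PP m s * G s) (at s)"
  using DERIV_chain2[OF BintGr(1) DERIV_minus[OF DERIV_ident]] by (simp add: PP_even)


lemma KB_nonneg: "KB m b \<ge> 0"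
  using KB_def[OF m1 b0 bm Gc Gb] KH_pos[OF m1] b0 bm by (simp add: less_imp_le)

lemma prod_bnd:
  fixes X Y K1 K2 e1 e2 e :: real
  assumes "\<bar>X\<bar> \<le> K1 * e1" "\<bar>Y\<bar> \<le> K2 * e2" "K1 \<ge> 0" "e1 \<ge> 0" "K2 \<ge> 0" "e2 \<ge> 0" "e1 * e2 = e"
  shows "\<bar>X * Y\<bar> \<le> K1 * K2 * e"
proof -
  have "\<bar>X * Y\<bar> \<le> (K1 * e1) * (K2 * e2)" unfolding abs_mult by (intro mult_mono assms) (auto simp: assms)
  also have "\<dots> = K1 * K2 * e" using assms(7) by (simp add: algebra_simps)
  finally show ?thesis .
qed

lemma ifexp_nonneg: "0 \<le> (if P then exp (x::real) else exp y)" "0 \<le> (if P then exp (x::real) else 1)" by auto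

definition "CS1 = 2 * KH m * KB m b / (m * TT m)"

lemma sol_aux:
  assumes hb: "\<And>x. \<bar>Y x\<bar> \<le> K * (if x \<ge> 0 then exp (-(m-1)*x) else 1)" and K0: "K \<ge> 0"
  shows "\<bar>Y s * Bint m (\<lambda>x. G (-x)) (-s)\<bar> + \<bar>Y (-s) * Bint m G s\<bar> \<le> 2 * (K * (KB m b * G0)) * exp (-b*\<bar>s\<bar>)"
proof -
  have "\<bar>Y s * Bint m (\<lambda>x. G (-x)) (-s)\<bar> \<le> K * (KB m b * G0) * exp (-b*\<bar>s\<bar>)"
    by (rule prod_bnd[OF hb BintGr(2)[of "-s"] K0 ifexp_nonneg(2) _ ifexp_nonneg(1) exp_case1])
       (use KB_nonneg G00[OF m1 b0 bm Gc Gb] in auto)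
  moreover have "\<bar>Y (-s) * Bint m G s\<bar> \<le> K * (KB m b * G0) * exp (-b*\<bar>s\<bar>)"
    by (rule prod_bnd[OF hb BintG(2)[of "s"] K0 ifexp_nonneg(2) _ ifexp_nonneg(1) exp_case2])
       (use KB_nonneg G00[OF m1 b0 bm Gc Gb] in auto)
  ultimately show ?thesis by linarith
qed

lemma mTT_pos: "m * TT m > 0" using m1 TT_pos[OF m1] by simp

lemma Sol_bnd: "\<bar>Sol m G s\<bar> \<le> (2 * KH m * KB m b / (m * TT m)) * G0 * exp (-b*\<bar>s\<bar>)"
proof -
  have "\<bar>Sol m G s\<bar> \<le> (\<bar>HH m s * Bint m (\<lambda>x. G (-x)) (-s)\<bar> + \<bar>HH m (-s) * Bint m G s\<bar>) / (m * TT m)"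
    unfolding Sol_def using mTT_pos by (simp add: abs_divide divide_right_mono abs_triangle_ineq)
  also have "\<dots> \<le> (2 * (KH m * (KB m b * G0)) * exp (-b*\<bar>s\<bar>)) / (m * TT m)"
    by (rule divide_right_mono[OF sol_aux[OF HH_bnd[OF m1]]]) (use KH_pos[OF m1] mTT_pos in auto)
  finally show ?thesis by (simp add: algebra_simps)
qed

lemma Sol1_bnd: "\<bar>Sol1 m G s\<bar> \<le> (2 * m * KH m * KB m b / (m * TT m)) * G0 * exp (-b*\<bar>s\<bar>)"
proof -
  have "\<bar>Sol1 m G s\<bar> \<le> (\<bar>H1 m s * Bint m (\<lambda>x. G (-x)) (-s)\<bar> + \<bar>H1 m (-s) * Bint m G s\<bar>) / (m * TT m)"
    unfolding Sol1_def using mTT_pos by (simp add: abs_divide divide_right_mono abs_triangle_ineq4)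
  also have "\<dots> \<le> (2 * ((m * KH m) * (KB m b * G0)) * exp (-b*\<bar>s\<bar>)) / (m * TT m)"
    by (rule divide_right_mono[OF sol_aux[OF H1_bnd[OF m1]]]) (use KH_pos[OF m1] mTT_pos m1 in auto)
  also have "\<dots> = (2 * m * KH m * KB m b / (m * TT m)) * G0 * exp (-b*\<bar>s\<bar>)" by (simp add: algebra_simps)
  finally show ?thesis .
qed

lemma Sol_deriv: "((Sol m G) has_real_derivative Sol1 m G s) (at s)"
  unfolding Sol_def[abs_def]
  apply (rule DERIV_cong)
  apply (rule DERIV_cdivide DERIV_add DERIV_mult' HH_deriv[OF m1] HHr_deriv[OF m1] A_deriv BintG(1))+
  apply (simp add: Sol1_def algebra_simps)
  done

lemma Sol1_deriv: "((Sol1 m G) has_real_derivative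
     (G s - (m-1) * tt m s * Sol1 m G s - m*(m+1)*(1 - tt m s^2) * Sol m G s)) (at s)"
proof -
  let ?A = "Bint m (\<lambda>x. G (-x)) (-s)" and ?B = "Bint m G s" and ?D = "m * TT m"
  have d: "((Sol1 m G) has_real_derivative
     (H1 m s * (HH m (-s) * PP m s * G s) + H2 m s * ?A - (H1 m (-s) * (- (HH m s * PP m s * G s)) + (- H2 m (-s)) * ?B)) / ?D) (at s)"
    unfolding Sol1_def[abs_def]
    by (rule DERIV_cdivide DERIV_diff DERIV_mult' H1_deriv[OF m1] H1r_deriv[OF m1] A_deriv BintG(1))+
  have o1: "H2 m s = - (m-1) * tt m s * H1 m s - m*(m+1)*(1 - tt m s^2) * HH m s"
    using HH_ode[OF m1, of s] by linarith
  have o2: "H2 m (-s) = (m-1) * tt m s * H1 m (-s) - m*(m+1)*(1 - tt m s^2) * HH m (-s)"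
    using HH_ode[OF m1, of "-s"] unfolding tt_odd by (simp add: algebra_simps)
  have w: "HH m (-s) * H1 m s + H1 m (-s) * HH m s = m * TT m * QQ m s" by (rule wronski[OF m1])
  have "(H1 m s * (HH m (-s) * PP m s * G s) + H2 m s * ?A - (H1 m (-s) * (- (HH m s * PP m s * G s)) + (- H2 m (-s)) * ?B)) / ?D
      = (PP m s * G s * (HH m (-s) * H1 m s + H1 m (-s) * HH m s)) / ?D + (H2 m s * ?A + H2 m (-s) * ?B) / ?D"
    by (simp add: algebra_simps add_divide_distrib)
  also have "\<dots> = G s + (H2 m s * ?A + H2 m (-s) * ?B) / ?D"
    unfolding w using mTT_pos PQ[of m s] TT_pos[OF m1] m1 by (simp add: field_simps)
  also have "\<dots> = G s - (m-1) * tt m s * Sol1 m G s - m*(m+1)*(1 - tt m s^2) * Sol m G s"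
  proof -
    have num: "H2 m s * ?A + H2 m (-s) * ?B = - ((m-1) * tt m s * (H1 m s * ?A - H1 m (-s) * ?B))
        - m*(m+1)*(1 - tt m s^2) * (HH m s * ?A + HH m (-s) * ?B)"
      unfolding o1 o2 by (simp add: algebra_simps)
    show ?thesis unfolding num Sol_def Sol1_def by (simp add: diff_divide_distrib right_diff_distrib)
  qed
  finally show ?thesis using d by (rule DERIV_cong[rotated])
qed

end

lemma exp_neg_lim: "(c::real) > 0 \<Longrightarrow> ((\<lambda>s. exp (-c* s)) \<longlongrightarrow> 0) at_top"
proof -
  assume c: "c > 0"
  have "LIM s at_top. c * s :> at_top"
    by (rule filterlim_tendsto_pos_mult_at_top[OF tendsto_const c filterlim_ident])
  then have "LIM s at_top. - (c * s) :> at_bot" by (simp add: filterlim_uminus_at_top)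
  from filterlim_compose[OF exp_at_bot this] show ?thesis by simp
qed

lemma tt_lim: "m > 0 \<Longrightarrow> ((tt m) \<longlongrightarrow> 1) at_top"
proof -
  assume m: "m > 0"
  have "LIM s at_top. m * s :> at_top"
    by (rule filterlim_tendsto_pos_mult_at_top[OF tendsto_const m filterlim_ident])
  from filterlim_compose[OF tanh_real_at_top this] show ?thesis unfolding tt_def[abs_def] by simp
qed

context fixes m :: real assumes m1: "m > 1"
begin

lemma HH_lim0: "((HH m) \<longlongrightarrow> 0) at_top"
proof (rule Lim_null_comparison)
  show "\<forall>\<^sub>F x in at_top. norm (HH m x) \<le> KH m * exp (-(m-1)*x)"
    using eventually_ge_at_top[of 0]
  proof eventually_elim
    fix x :: real assume x: "x \<ge> 0"
    show "norm (HH m x) \<le> KH m * exp (-(m-1)*x)" using HH_bnd[OF m1, of x] unfolding if_P[OF x] by simp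
  qed
  show "((\<lambda>x. KH m * exp (-(m-1)*x)) \<longlongrightarrow> 0) at_top"
    using tendsto_mult_right_zero[OF exp_neg_lim[of "m-1"]] m1 by simp
qed

lemma QQ_lim0: "((QQ m) \<longlongrightarrow> 0) at_top"
proof (rule Lim_null_comparison)
  show "\<forall>\<^sub>F x in at_top. norm (QQ m x) \<le> 2 * exp (-(m-1)*x)"
    using eventually_ge_at_top[of 0] by eventually_elim (use QQ_bnd0[OF m1] in auto)
  show "((\<lambda>x. 2 * exp (-(m-1)*x)) \<longlongrightarrow> 0) at_top"
    using tendsto_mult_right_zero[OF exp_neg_lim[of "m-1"]] m1 by simp
qed

lemma RR_lim0: "((RR m) \<longlongrightarrow> 0) at_top"
proof (rule Lim_null_comparison)
  show "\<forall>\<^sub>F x in at_top. norm (RR m x) \<le> 2/(m-1) * exp (-(m-1)*x)"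
    using eventually_ge_at_top[of 0]
  proof eventually_elim
    fix x :: real assume x: "x \<ge> 0"
    have "2 * (exp (-(m-1)*x)/(m-1)) = 2/(m-1) * exp (-(m-1)*x)" by simp
    then show "norm (RR m x) \<le> 2/(m-1) * exp (-(m-1)*x)"
      using RR_bnd0[OF m1 x] RR_nonneg[OF m1, of x] by simp
  qed
  show "((\<lambda>x. 2/(m-1) * exp (-(m-1)*x)) \<longlongrightarrow> 0) at_top"
    using tendsto_mult_right_zero[OF exp_neg_lim[of "m-1"], of "2/(m-1)"] m1 by simp
qed

lemma HHr_lim: "((\<lambda>s. HH m (-s)) \<longlongrightarrow> TT m) at_top"
proof -
  have e: "HH m (-s) = tt m s * (TT m - RR m s) - QQ m s" for s
  proof -
    have r: "RR m (-s) = TT m - RR m s" using RR_sym[OF m1, of s] by simp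
    show ?thesis unfolding HH_def tt_odd QQ_even r by simp
  qed
  have "((\<lambda>s. tt m s * (TT m - RR m s) - QQ m s) \<longlongrightarrow> 1 * (TT m - 0) - 0) at_top"
    by (intro tendsto_intros tt_lim RR_lim0 QQ_lim0) (use m1 in auto)
  then show ?thesis unfolding e by simp
qed

lemma wr_const:
  assumes du: "\<And>s. (u has_real_derivative u1 s) (at s)" "\<And>s. (u1 has_real_derivative u2 s) (at s)"
    and ou: "\<And>s. u2 s + (m-1) * tt m s * u1 s + m*(m+1)*(1 - tt m s^2) * u s = 0"
    and dy: "\<And>s. (y has_real_derivative y1 s) (at s)" "\<And>s. (y1 has_real_derivative y2 s) (at s)"
    and oy: "\<And>s. y2 s + (m-1) * tt m s * y1 s + m*(m+1)*(1 - tt m s^2) * y s = 0"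
  shows "PP m s * (u s * y1 s - u1 s * y s) = PP m 0 * (u 0 * y1 0 - u1 0 * y 0)"
proof -
  have "\<forall>x. ((\<lambda>s. PP m s * (u s * y1 s - u1 s * y s)) has_real_derivative 0) (at x)"
  proof
    fix x
    have d: "((\<lambda>s. PP m s * (u s * y1 s - u1 s * y s)) has_real_derivative
       PP m x * (u x * y2 x + u1 x * y1 x - (u1 x * y1 x + u2 x * y x)) + (m-1) * tt m x * PP m x * (u x * y1 x - u1 x * y x)) (at x)"
      by (rule DERIV_mult' DERIV_diff PP_deriv[OF m0[OF m1]] du dy)+
    have e1: "u2 x = - (m-1) * tt m x * u1 x - m*(m+1)*(1 - tt m x^2) * u x" using ou[of x] by linarith
    have e2: "y2 x = - (m-1) * tt m x * y1 x - m*(m+1)*(1 - tt m x^2) * y x" using oy[of x] by linarith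
    have "PP m x * (u x * y2 x + u1 x * y1 x - (u1 x * y1 x + u2 x * y x)) + (m-1) * tt m x * PP m x * (u x * y1 x - u1 x * y x) = 0"
      unfolding e1 e2 by (simp add: algebra_simps)
    with d show "((\<lambda>s. PP m s * (u s * y1 s - u1 s * y s)) has_real_derivative 0) (at x)" by simp
  qed
  from DERIV_isconst_all[OF this] show ?thesis by blast
qed

lemma uniq:
  assumes du: "\<And>s. (u has_real_derivative u1 s) (at s)" "\<And>s. (u1 has_real_derivative u2 s) (at s)"
    and ou: "\<And>s. u2 s + (m-1) * tt m s * u1 s + m*(m+1)*(1 - tt m s^2) * u s = 0"
    and l1: "(u \<longlongrightarrow> 0) at_top" and l2: "((\<lambda>s. u (-s)) \<longlongrightarrow> 0) at_top"
  shows "u s = 0"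
proof -
  define a where "a = PP m 0 * (u 0 * H1 m 0 - u1 0 * HH m 0)"
  define b where "b = PP m 0 * (u 0 * (- H1 m (-0)) - u1 0 * HH m (-0))"
  have ha: "PP m s * (u s * H1 m s - u1 s * HH m s) = a" for s
    unfolding a_def by (rule wr_const[OF du ou HH_deriv[OF m1] H1_deriv[OF m1] HH_ode[OF m1]])
  have odr: "H2 m (-s) + (m-1) * tt m s * (- H1 m (-s)) + m*(m+1)*(1 - tt m s^2) * HH m (-s) = 0" for s
    using HH_ode[OF m1, of "-s"] unfolding tt_odd by (simp add: algebra_simps)
  have hb: "PP m s * (u s * (- H1 m (-s)) - u1 s * HH m (-s)) = b" for s
    unfolding b_def
  proof (rule wr_const[OF du ou HHr_deriv[OF m1] _ odr])
    fix s show "((\<lambda>s. - H1 m (-s)) has_real_derivative H2 m (-s)) (at s)"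
      using DERIV_minus[OF H1r_deriv[OF m1, of s]] by simp
  qed
  have key: "m * TT m * u s = a * HH m (-s) - b * HH m s" for s
  proof -
    have "a * HH m (-s) - b * HH m s = PP m s * u s * (HH m (-s) * H1 m s + H1 m (-s) * HH m s)"
      unfolding ha[of s, symmetric] hb[of s, symmetric] by (simp add: algebra_simps)
    also have "\<dots> = m * TT m * u s * (PP m s * QQ m s)" unfolding wronski[OF m1] by (simp add: algebra_simps)
    finally show ?thesis using PQ[of m s] by simp
  qed
  have "((\<lambda>s. m * TT m * u s) \<longlongrightarrow> m * TT m * 0) at_top" by (intro tendsto_intros l1)
  moreover have "((\<lambda>s. m * TT m * u s) \<longlongrightarrow> a * TT m - b * 0) at_top"
    unfolding key by (intro tendsto_intros HHr_lim HH_lim0)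
  ultimately have "a * TT m = 0" using tendsto_unique[OF trivial_limit_at_top_linorder] by fastforce
  then have a0: "a = 0" using TT_pos[OF m1] by simp
  have "((\<lambda>s. m * TT m * u (-s)) \<longlongrightarrow> m * TT m * 0) at_top" by (intro tendsto_intros l2)
  moreover have "((\<lambda>s. m * TT m * u (-s)) \<longlongrightarrow> a * 0 - b * TT m) at_top"
    unfolding key by (simp only: minus_minus) (intro tendsto_intros HHr_lim HH_lim0)
  ultimately have "b * TT m = 0" using tendsto_unique[OF trivial_limit_at_top_linorder] by fastforce
  then have b0: "b = 0" using TT_pos[OF m1] by simp
  show ?thesis using key[of s] a0 b0 TT_pos[OF m1] m1 by simp
qed

end

definition step :: "real \<Rightarrow> (nat \<Rightarrow> real poly) \<Rightarrow> nat \<Rightarrow> real poly" where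
  "step m C i = pderiv (C i) * [:m, 0, -m:] + (case i of 0 \<Rightarrow> 0 | Suc j \<Rightarrow> C j)"

lemma step_supp: "(\<forall>i>N. C i = 0) \<Longrightarrow> \<forall>i>Suc N. step m C i = 0"
  unfolding step_def by (auto split: nat.split)

lemma steps_supp: "(\<forall>i>N. C i = 0) \<Longrightarrow> \<forall>i>N + a. (step m ^^ a) C i = 0"
  by (induction a) (auto dest: step_supp[of "N + _" _ m])

lemma poly_tt_deriv:
  "((\<lambda>s. poly P (tt m s)) has_real_derivative poly (pderiv P) (tt m x) * (m * (1 - tt m x ^ 2))) (at x)"
  by (rule DERIV_chain2[OF poly_DERIV tt_deriv])

lemma rep_deriv:
  fixes h :: "real \<Rightarrow> real"
  assumes supp: "\<forall>i>N. C i = 0"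
    and dh: "\<And>i x. i \<le> N \<Longrightarrow> ((deriv ^^ i) h has_real_derivative (deriv ^^ Suc i) h x) (at x)"
  shows "((\<lambda>s. \<Sum>i\<le>N. poly (C i) (tt m s) * (deriv ^^ i) h s) has_real_derivative
           (\<Sum>i\<le>Suc N. poly (step m C i) (tt m x) * (deriv ^^ i) h x)) (at x)"
proof -
  have d: "((\<lambda>s. \<Sum>i\<le>N. poly (C i) (tt m s) * (deriv ^^ i) h s) has_real_derivative
     (\<Sum>i\<le>N. poly (C i) (tt m x) * (deriv ^^ Suc i) h x + poly (pderiv (C i)) (tt m x) * (m * (1 - tt m x ^ 2)) * (deriv ^^ i) h x)) (at x)"
    by (rule DERIV_sum, rule DERIV_mult'[OF poly_tt_deriv dh]) simp
  have e1: "(\<Sum>i\<le>Suc N. poly (pderiv (C i) * [:m, 0, -m:]) (tt m x) * (deriv ^^ i) h x)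
      = (\<Sum>i\<le>N. poly (pderiv (C i)) (tt m x) * (m * (1 - tt m x ^ 2)) * (deriv ^^ i) h x)"
    using supp by (simp add: algebra_simps power2_eq_square)
  have e2: "(\<Sum>i\<le>Suc N. poly (case i of 0 \<Rightarrow> 0 | Suc j \<Rightarrow> C j) (tt m x) * (deriv ^^ i) h x)
      = (\<Sum>i\<le>N. poly (C i) (tt m x) * (deriv ^^ Suc i) h x)"
    by (subst sum.atMost_Suc_shift) simp
  have "(\<Sum>i\<le>Suc N. poly (step m C i) (tt m x) * (deriv ^^ i) h x)
      = (\<Sum>i\<le>Suc N. poly (pderiv (C i) * [:m, 0, -m:]) (tt m x) * (deriv ^^ i) h x)
        + (\<Sum>i\<le>Suc N. poly (case i of 0 \<Rightarrow> 0 | Suc j \<Rightarrow> C j) (tt m x) * (deriv ^^ i) h x)"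
  proof -
    have "poly (step m C i) (tt m x) * (deriv ^^ i) h x = poly (pderiv (C i) * [:m, 0, -m:]) (tt m x) * (deriv ^^ i) h x
        + poly (case i of 0 \<Rightarrow> 0 | Suc j \<Rightarrow> C j) (tt m x) * (deriv ^^ i) h x" for i
      unfolding step_def by (simp only: poly_add distrib_right)
    then show ?thesis by (simp only: sum.distrib)
  qed
  also have "\<dots> = (\<Sum>i\<le>N. poly (C i) (tt m x) * (deriv ^^ Suc i) h x + poly (pderiv (C i)) (tt m x) * (m * (1 - tt m x ^ 2)) * (deriv ^^ i) h x)"
    unfolding e1 e2 by (simp add: sum.distrib)
  finally show ?thesis using d by simp
qed

definition pb :: "real poly \<Rightarrow> real" where "pb P = (\<Sum>i\<le>degree P. \<bar>coeff P i\<bar>)"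

lemma pb_bound: "\<bar>x\<bar> \<le> 1 \<Longrightarrow> \<bar>poly P x\<bar> \<le> pb P"
proof -
  assume x: "\<bar>x\<bar> \<le> 1"
  have "\<bar>poly P x\<bar> \<le> (\<Sum>i\<le>degree P. \<bar>coeff P i * x ^ i\<bar>)" unfolding poly_altdef by (rule sum_abs)
  also have "\<dots> \<le> (\<Sum>i\<le>degree P. \<bar>coeff P i\<bar>)"
  proof (rule sum_mono)
    fix i
    have "\<bar>x\<bar> ^ i \<le> 1" using x by (simp add: power_le_one)
    then show "\<bar>coeff P i * x ^ i\<bar> \<le> \<bar>coeff P i\<bar>"
      by (simp add: abs_mult power_abs mult_left_le)
  qed
  finally show ?thesis unfolding pb_def .
qed

lemma pb_nonneg: "pb P \<ge> 0" unfolding pb_def by (simp add: sum_nonneg)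

lemma poly_tt_bound: "\<bar>poly P (tt m x)\<bar> \<le> pb P" using pb_bound tt_bound by blast

lemma rep_bound:
  assumes "\<And>i. i \<le> N \<Longrightarrow> \<bar>(deriv ^^ i) h s\<bar> * w \<le> M" "w \<ge> 0"
  shows "\<bar>\<Sum>i\<le>N. poly (C i) (tt m s) * (deriv ^^ i) h s\<bar> * w \<le> (\<Sum>i\<le>N. pb (C i)) * M"
proof -
  have "\<bar>\<Sum>i\<le>N. poly (C i) (tt m s) * (deriv ^^ i) h s\<bar> * w \<le> (\<Sum>i\<le>N. \<bar>poly (C i) (tt m s) * (deriv ^^ i) h s\<bar>) * w"
    using assms(2) by (intro mult_right_mono sum_abs) auto
  also have "\<dots> = (\<Sum>i\<le>N. \<bar>poly (C i) (tt m s)\<bar> * (\<bar>(deriv ^^ i) h s\<bar> * w))"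
    by (simp add: sum_distrib_right abs_mult mult.assoc)
  also have "\<dots> \<le> (\<Sum>i\<le>N. pb (C i) * M)"
    by (intro sum_mono mult_mono poly_tt_bound assms) (auto intro: mult_nonneg_nonneg assms(2) pb_nonneg)
  finally show ?thesis by (simp add: sum_distrib_right)
qed

lemma phi_eq: "phi n s = cosh (real (n-1) * s) powr (1 / real (n-1))"
  unfolding phi_def ..

lemma phi_pos: "phi n s > 0" unfolding phi_def using cosh_pos' by simp

lemma phi_has_deriv: "n \<ge> 2 \<Longrightarrow> ((phi n) has_real_derivative (phi n s * tt (real (n-1)) s)) (at s)"
proof -
  assume n: "n \<ge> 2"
  let ?m = "real (n-1)"
  have "((\<lambda>x. cosh (?m * x) powr (1/?m)) has_real_derivative (1/?m * ?m * tt ?m s * cosh (?m * s) powr (1/?m))) (at s)"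
    by (rule cpow_deriv)
  moreover have "1/?m * ?m = 1" using n by simp
  ultimately show ?thesis unfolding phi_def[abs_def] by (simp add: mult.commute)
qed

lemma phi_deriv: "n \<ge> 2 \<Longrightarrow> deriv (phi n) s / phi n s = tt (real (n-1)) s"
  using DERIV_imp_deriv[OF phi_has_deriv] phi_pos[of n s] by simp

lemma phi_pow: "n \<ge> 2 \<Longrightarrow> phi n s ^ (2*n-2) = cosh (real (n-1) * s) ^ 2"
proof -
  assume n: "n \<ge> 2"
  let ?m = "real (n-1)" and ?c = "cosh (real (n-1) * s)"
  have "phi n s ^ (2*n-2) = phi n s powr real (2*n-2)" using phi_pos[of n s] by (simp add: powr_realpow)
  also have "\<dots> = ?c powr (1/?m * real (2*n-2))" unfolding phi_def powr_powr ..
  also have "1/?m * real (2*n-2) = real (2::nat)" using n by (simp add: of_nat_diff field_simps)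
  also have "?c powr real (2::nat) = ?c ^ 2" using cosh_pos' by (intro powr_realpow) 
  finally show ?thesis .
qed

lemma sech_sq: "1 / cosh (x::real) ^ 2 = 1 - tanh x ^ 2"
proof -
  have "1 - tanh x ^ 2 = (cosh x ^ 2 - sinh x ^ 2) / cosh x ^ 2"
    unfolding tanh_def using cosh_pos'[of x] by (simp add: power_divide diff_divide_distrib)
  then show ?thesis using hyperbolic_pythagoras[of x] by simp
qed

lemma T0_eq: "n \<ge> 3 \<Longrightarrow> T0 n f = (\<lambda>s. (deriv ^^ 2) f s + (real (n-1) - 1) * tt (real (n-1)) s * deriv f s
   + real (n-1) * (real (n-1) + 1) * (1 - tt (real (n-1)) s ^ 2) * f s)"
proof
  fix s assume n: "n \<ge> 3"
  have a: "real (n-2) = real (n-1) - 1" using n by (simp add: of_nat_diff)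
  have b: "real n = real (n-1) + 1" using n by (simp add: of_nat_diff)
  have pp: "phi n s ^ (2*n-2) = cosh (real (n-1) * s) ^ 2" using n by (intro phi_pow) auto
  have c: "real n * real (n-1) / phi n s ^ (2*n-2) = real (n-1) * (real (n-1) + 1) * (1 - tt (real (n-1)) s ^ 2)"
  proof -
    have "real n * real (n-1) / phi n s ^ (2*n-2) = (real (n-1) * (real (n-1) + 1)) * (1 / cosh (real (n-1) * s) ^ 2)"
      unfolding pp b by simp
    then show ?thesis unfolding sech_sq tt_def .
  qed
  have pd: "deriv (phi n) s / phi n s = tt (real (n-1)) s" using n by (intro phi_deriv) auto
  show "T0 n f s = (deriv ^^ 2) f s + (real (n-1) - 1) * tt (real (n-1)) s * deriv f s
   + real (n-1) * (real (n-1) + 1) * (1 - tt (real (n-1)) s ^ 2) * f s"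
    unfolding T0_def pd a c by simp
qed

definition C0 :: "real \<Rightarrow> nat \<Rightarrow> real poly" where
  "C0 m i = (if i = 0 then [:m*(m+1), 0, -(m*(m+1)):] else if i = 1 then [:0, m-1:] else if i = 2 then 1 else 0)"
definition C1 :: "real \<Rightarrow> nat \<Rightarrow> real poly" where
  "C1 m i = (if i = 0 then [:m*(m+1), 0, -(m*(m+1)):] else if i = 1 then [:0, m-1:] else 0)"

lemma C0_supp: "\<forall>i>2. C0 m i = 0" unfolding C0_def by auto
lemma C1_supp: "\<forall>i>1. C1 m i = 0" unfolding C1_def by auto

lemma C1_sum: "(\<Sum>i\<le>1. poly (C1 m i) (tt m s) * (deriv ^^ i) f s) =
   (m - 1) * tt m s * deriv f s + m * (m + 1) * (1 - tt m s ^ 2) * f s"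
  unfolding C1_def by (simp add: algebra_simps power2_eq_square)

lemma T0_rep: "n \<ge> 3 \<Longrightarrow> T0 n f = (\<lambda>s. \<Sum>i\<le>2. poly (C0 (real (n-1)) i) (tt (real (n-1)) s) * (deriv ^^ i) f s)"
proof -
  assume n: "n \<ge> 3"
  show ?thesis unfolding T0_eq[OF n]
  proof
    fix s
    show "(deriv ^^ 2) f s + (real (n-1) - 1) * tt (real (n-1)) s * deriv f s
      + real (n-1) * (real (n-1) + 1) * (1 - tt (real (n-1)) s ^ 2) * f s
      = (\<Sum>i\<le>2. poly (C0 (real (n-1)) i) (tt (real (n-1)) s) * (deriv ^^ i) f s)"
      unfolding C0_def numeral_2_eq_2 by (simp add: algebra_simps power2_eq_square)
  qed
qed

lemma weight_eq: "phi n s powr (-q) = cosh (real (n-1) * s) powr (-q / real (n-1))"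
  unfolding phi_def powr_powr by simp

lemma funpow_deriv_Suc: "(deriv ^^ Suc i) f = deriv ((deriv ^^ i) f)" by simp

lemma deriv_ok: "Ck k f \<Longrightarrow> i < k \<Longrightarrow> ((deriv ^^ i) f has_real_derivative (deriv ^^ Suc i) f x) (at x)"
proof -
  assume "Ck k f" "i < k"
  then have "(deriv ^^ i) f differentiable_on UNIV" unfolding Ck_def by blast
  then have "(deriv ^^ i) f differentiable at x" using differentiable_onD[of _ UNIV x] by simp
  then show ?thesis unfolding funpow_deriv_Suc DERIV_deriv_iff_real_differentiable[symmetric] .
qed

lemma deriv_cont: "Ck k f \<Longrightarrow> i \<le> k \<Longrightarrow> continuous_on UNIV ((deriv ^^ i) f)"
proof -
  assume ck: "Ck k f" and i: "i \<le> k"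
  show ?thesis
  proof (cases "i = k")
    case True then show ?thesis using ck unfolding Ck_def by simp
  next
    case False
    then have "(deriv ^^ i) f differentiable_on UNIV" using ck i unfolding Ck_def by simp
    then show ?thesis by (rule differentiable_imp_continuous_on)
  qed
qed

lemma sup_nonneg:
  fixes F w :: "real \<Rightarrow> real"
  assumes "bdd_above (range (\<lambda>s. \<bar>F s\<bar> * w s))" "\<And>s. w s \<ge> 0"
  shows "(SUP s. \<bar>F s\<bar> * w s) \<ge> 0"
proof -
  have "\<bar>F 0\<bar> * w 0 \<le> (SUP s. \<bar>F s\<bar> * w s)" by (rule cSUP_upper[OF _ assms(1)]) simp
  moreover have "\<bar>F 0\<bar> * w 0 \<ge> 0" using assms(2)[of 0] by simp
  ultimately show ?thesis by linarith
qed

lemma weight_nonneg: "phi n s powr (-q) \<ge> 0" by simp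

lemma Cspace_bound:
  assumes f: "f \<in> Cspace n k q" and i: "i \<le> k"
  shows "\<bar>(deriv ^^ i) f s\<bar> * phi n s powr (-q) \<le> Cnorm n k q f"
proof -
  have bdd: "\<And>a. a \<le> k \<Longrightarrow> bdd_above (range (\<lambda>s. \<bar>(deriv ^^ a) f s\<bar> * phi n s powr (-q)))"
    using f unfolding Cspace_def by auto
  have "\<bar>(deriv ^^ i) f s\<bar> * phi n s powr (-q) \<le> (SUP s. \<bar>(deriv ^^ i) f s\<bar> * phi n s powr (-q))"
    by (rule cSUP_upper[OF _ bdd[OF i]]) simp
  also have "\<dots> \<le> Cnorm n k q f" unfolding Cnorm_def
    by (rule member_le_sum[of i "{..k}" "\<lambda>a. SUP s. \<bar>(deriv ^^ a) f s\<bar> * phi n s powr (-q)"])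
       (use i sup_nonneg[OF bdd weight_nonneg] in auto)
  finally show ?thesis .
qed

lemma Cnorm_nonneg: "f \<in> Cspace n k q \<Longrightarrow> Cnorm n k q f \<ge> 0"
proof -
  assume f: "f \<in> Cspace n k q"
  have "0 \<le> \<bar>(deriv ^^ 0) f 0\<bar> * phi n 0 powr (-q)" by simp
  also have "\<dots> \<le> Cnorm n k q f" by (rule Cspace_bound[OF f]) simp
  finally show ?thesis .
qed

context fixes n k :: nat assumes n3: "n \<ge> 3" and k2: "k \<ge> 2"
begin

abbreviation "mm \<equiv> real (n - 1)"

lemma T0_derivs:
  assumes ck: "Ck k f" and a: "a \<le> k - 2"
  shows "(deriv ^^ a) (T0 n f) = (\<lambda>s. \<Sum>i\<le>a+2. poly ((step mm ^^ a) (C0 mm) i) (tt mm s) * (deriv ^^ i) f s)"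
  using a
proof (induction a)
  case 0
  show ?case using T0_rep[OF n3, of f] by (simp only: funpow_0 id_apply add_0)
next
  case (Suc a)
  then have IH: "(deriv ^^ a) (T0 n f) = (\<lambda>s. \<Sum>i\<le>a+2. poly ((step mm ^^ a) (C0 mm) i) (tt mm s) * (deriv ^^ i) f s)"
    by simp
  have supp: "\<forall>i>a+2. (step mm ^^ a) (C0 mm) i = 0" using steps_supp[OF C0_supp, of a mm] by (simp add: add.commute)
  have dh: "\<And>i x. i \<le> a+2 \<Longrightarrow> ((deriv ^^ i) f has_real_derivative (deriv ^^ Suc i) f x) (at x)"
    by (rule deriv_ok[OF ck]) (use Suc.prems in auto)
  show ?case
  proof
    fix x
    have "(deriv ^^ Suc a) (T0 n f) x = deriv ((deriv ^^ a) (T0 n f)) x" by simp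
    also have "\<dots> = (\<Sum>i\<le>Suc (a+2). poly (step mm ((step mm ^^ a) (C0 mm)) i) (tt mm x) * (deriv ^^ i) f x)"
      unfolding IH by (rule DERIV_imp_deriv[OF rep_deriv[OF supp dh]])
    finally show "(deriv ^^ Suc a) (T0 n f) x = (\<Sum>i\<le>Suc a+2. poly ((step mm ^^ Suc a) (C0 mm) i) (tt mm x) * (deriv ^^ i) f x)"
      by simp
  qed
qed

lemma rep_differentiable:
  assumes ck: "Ck k f" and N: "N < k" and supp: "\<forall>i>N. C i = 0"
  shows "(\<lambda>s. \<Sum>i\<le>N. poly (C i) (tt mm s) * (deriv ^^ i) f s) differentiable_on UNIV"
proof -
  have "\<And>x. (\<lambda>s. \<Sum>i\<le>N. poly (C i) (tt mm s) * (deriv ^^ i) f s) differentiable at x"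
    using rep_deriv[OF supp deriv_ok[OF ck]] N real_differentiable_def by fastforce
  then show ?thesis by (simp add: differentiable_at_imp_differentiable_on)
qed

lemma rep_cont:
  assumes ck: "Ck k f" and N: "N \<le> k"
  shows "continuous_on UNIV (\<lambda>s. \<Sum>i\<le>N. poly (C i) (tt mm s) * (deriv ^^ i) f s)"
proof (intro continuous_on_sum continuous_on_mult)
  fix i assume "i \<in> {..N}"
  then show "continuous_on UNIV ((deriv ^^ i) f)" using deriv_cont[OF ck] N by auto
  show "continuous_on UNIV (\<lambda>s. poly (C i) (tt mm s))"
    by (rule continuous_on_compose2[OF continuous_on_poly[OF continuous_on_id] tt_cont]) auto
qed

definition CF where "CF = (\<Sum>a\<le>k-2. \<Sum>i\<le>a+2. pb ((step mm ^^ a) (C0 mm) i))"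

lemma T0_forward:
  assumes f: "f \<in> Cspace n k q"
  shows "T0 n f \<in> Cspace n (k-2) q" "Cnorm n (k-2) q (T0 n f) \<le> CF * Cnorm n k q f"
proof -
  have ck: "Ck k f" using f unfolding Cspace_def by blast
  have pt: "\<bar>(deriv ^^ a) (T0 n f) s\<bar> * phi n s powr (-q) \<le> (\<Sum>i\<le>a+2. pb ((step mm ^^ a) (C0 mm) i)) * Cnorm n k q f"
    if a: "a \<le> k-2" for a s
  proof -
    have "\<And>i. i \<le> a+2 \<Longrightarrow> \<bar>(deriv ^^ i) f s\<bar> * phi n s powr (-q) \<le> Cnorm n k q f"
      using a k2 by (intro Cspace_bound[OF f]) linarith
    from rep_bound[OF this weight_nonneg] show ?thesis unfolding T0_derivs[OF ck a] .
  qed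
  have "Ck (k-2) (T0 n f)"
    unfolding Ck_def
  proof (intro conjI allI impI)
    fix a assume a: "a < k - 2"
    show "(deriv ^^ a) (T0 n f) differentiable_on UNIV"
    proof -
      have a': "a \<le> k - 2" using a by linarith
      have supp: "\<forall>i>a+2. (step mm ^^ a) (C0 mm) i = 0" using steps_supp[OF C0_supp, of a mm] by (simp add: add.commute)
      have "a + 2 < k" using a by linarith
      from rep_differentiable[OF ck this supp] show ?thesis unfolding T0_derivs[OF ck a'] .
    qed
  next
    show "continuous_on UNIV ((deriv ^^ (k-2)) (T0 n f))"
    proof -
      have "k - 2 + 2 \<le> k" using k2 by simp
      from rep_cont[OF ck this] show ?thesis unfolding T0_derivs[OF ck order_refl] .
    qed
  qed
  moreover have "bdd_above (range (\<lambda>s. \<bar>(deriv ^^ a) (T0 n f) s\<bar> * phi n s powr (-q)))" if "a \<le> k-2" for a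
    using pt[OF that] by (intro bdd_aboveI2) blast
  ultimately show "T0 n f \<in> Cspace n (k-2) q" unfolding Cspace_def by blast
  have "Cnorm n (k-2) q (T0 n f) \<le> (\<Sum>a\<le>k-2. (\<Sum>i\<le>a+2. pb ((step mm ^^ a) (C0 mm) i)) * Cnorm n k q f)"
    unfolding Cnorm_def[of n "k-2" q] by (intro sum_mono cSUP_least pt) (simp_all)
  also have "\<dots> = CF * Cnorm n k q f" unfolding CF_def by (simp add: sum_distrib_right)
  finally show "Cnorm n (k-2) q (T0 n f) \<le> CF * Cnorm n k q f" .
qed

end

context fixes n k :: nat and q :: real
  assumes n3: "n \<ge> 3" and k2: "k \<ge> 2" and q1: "- real (n - 2) < q" and q0: "q < 0"
begin

abbreviation "m \<equiv> real (n - 1)"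

lemma m1: "m > 1" using n3 by simp
lemma bq0: "-q > 0" using q0 by simp
lemma bqm: "-q < m - 1"
proof -
  have "real (n - 2) = m - 1" using n3 by (simp add: of_nat_diff)
  then show ?thesis using q1 by simp
qed

lemma r0: "0 \<le> -q/m" by (rule divide_nonneg_pos) (use q0 m1 in auto)
lemma r1: "-q/m \<le> 1"
proof -
  have "-q \<le> m" using bqm by linarith
  moreover have "m > 0" using m1 by simp
  ultimately show ?thesis by (simp only: divide_le_eq_1_pos)
qed

lemma w_upper: "phi n s powr (-q) \<le> exp (-q * \<bar>s\<bar>)"
proof -
  have "cosh (m * s) powr (-q/m) \<le> exp ((-q/m) * m * \<bar>s\<bar>)"
    by (rule cpow_upper[OF _ r0]) (use m1 in simp)
  then show ?thesis unfolding weight_eq using m1 by simp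
qed

lemma w_lower: "exp (-q * \<bar>s\<bar>) / 2 \<le> phi n s powr (-q)"
proof -
  have "exp ((-q/m) * m * \<bar>s\<bar>) / 2 \<le> cosh (m * s) powr (-q/m)"
    by (rule cpow_lower[OF _ r0 r1]) (use m1 in simp)
  then show ?thesis unfolding weight_eq using m1 by simp
qed

lemma w_pos: "phi n s powr (-q) > 0" using phi_pos[of n s] by simp

lemma g_bound:
  assumes g: "g \<in> Cspace n (k-2) q"
  shows "\<bar>g x\<bar> \<le> (2 * Cnorm n (k-2) q g) * exp (- (-q) * \<bar>x\<bar>)"
proof -
  have a: "\<bar>g x\<bar> * phi n x powr (-q) \<le> Cnorm n (k-2) q g" using Cspace_bound[OF g, of 0 x] by simp
  have "\<bar>g x\<bar> * (exp (-q * \<bar>x\<bar>) / 2) \<le> \<bar>g x\<bar> * phi n x powr (-q)"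
    by (rule mult_left_mono[OF w_lower]) simp
  with a have "\<bar>g x\<bar> * exp (-q * \<bar>x\<bar>) \<le> 2 * Cnorm n (k-2) q g" by simp
  then have "\<bar>g x\<bar> \<le> 2 * Cnorm n (k-2) q g / exp (-q * \<bar>x\<bar>)" by (simp add: field_simps)
  also have "\<dots> = (2 * Cnorm n (k-2) q g) * exp (- (-q) * \<bar>x\<bar>)" by (simp add: exp_minus field_simps)
  finally show ?thesis .
qed

lemma g_cont: "g \<in> Cspace n (k-2) q \<Longrightarrow> continuous_on UNIV g"
  using deriv_cont[of "k-2" g 0] unfolding Cspace_def by auto


lemma deriv1_eq: "(deriv ^^ 1) F = deriv F" by simp
lemma deriv2_eq: "(deriv ^^ 2) F = deriv (deriv F)" by (simp add: numeral_2_eq_2)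

lemma Ck_g: "g \<in> Cspace n (k-2) q \<Longrightarrow> Ck (k-2) g" unfolding Cspace_def by auto

context fixes g assumes g: "g \<in> Cspace n (k-2) q"
begin

lemmas SolD = Sol_deriv[OF m1 bq0 bqm g_cont[OF g] g_bound[OF g]]
lemmas Sol1D = Sol1_deriv[OF m1 bq0 bqm g_cont[OF g] g_bound[OF g]]
lemmas SolB = Sol_bnd[OF m1 bq0 bqm g_cont[OF g] g_bound[OF g]]
lemmas Sol1B = Sol1_bnd[OF m1 bq0 bqm g_cont[OF g] g_bound[OF g]]

lemma d1: "deriv (Sol m g) = Sol1 m g"
  by (rule ext, rule DERIV_imp_deriv[OF SolD])

lemma d2: "(deriv ^^ 2) (Sol m g) = (\<lambda>s. g s - (\<Sum>i\<le>1. poly (C1 m i) (tt m s) * (deriv ^^ i) (Sol m g) s))"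
proof
  fix s
  have "(deriv ^^ 2) (Sol m g) s = deriv (Sol1 m g) s" unfolding deriv2_eq d1 ..
  also have "\<dots> = g s - (m-1) * tt m s * Sol1 m g s - m*(m+1)*(1 - tt m s^2) * Sol m g s"
    by (rule DERIV_imp_deriv[OF Sol1D])
  also have "\<dots> = g s - (\<Sum>i\<le>1. poly (C1 m i) (tt m s) * (deriv ^^ i) (Sol m g) s)"
    unfolding C1_sum d1 by simp
  finally show "(deriv ^^ 2) (Sol m g) s = g s - (\<Sum>i\<le>1. poly (C1 m i) (tt m s) * (deriv ^^ i) (Sol m g) s)" .
qed

lemma boot:
  assumes j: "j \<le> k - 2"
  shows "(deriv ^^ (j+2)) (Sol m g) = (\<lambda>s. (deriv ^^ j) g s - (\<Sum>i\<le>j+1. poly ((step m ^^ j) (C1 m) i) (tt m s) * (deriv ^^ i) (Sol m g) s))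
     \<and> (\<forall>i\<le>j+1. \<forall>x. ((deriv ^^ i) (Sol m g) has_real_derivative (deriv ^^ Suc i) (Sol m g) x) (at x))"
  using j
proof (induction j)
  case 0
  have a: "(deriv ^^ (0+2)) (Sol m g) = (\<lambda>s. (deriv ^^ 0) g s - (\<Sum>i\<le>0+1. poly ((step m ^^ 0) (C1 m) i) (tt m s) * (deriv ^^ i) (Sol m g) s))"
    unfolding add_0 funpow_0 id_apply by (rule d2)
  have b: "\<forall>i\<le>0+1. \<forall>x. ((deriv ^^ i) (Sol m g) has_real_derivative (deriv ^^ Suc i) (Sol m g) x) (at x)"
  proof (intro allI impI)
    fix i x assume "i \<le> (0::nat) + 1"
    then consider "i = 0" | "i = 1" by linarith
    then show "((deriv ^^ i) (Sol m g) has_real_derivative (deriv ^^ Suc i) (Sol m g) x) (at x)"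
    proof cases
      case 1
      have "(deriv ^^ Suc 0) (Sol m g) = Sol1 m g" unfolding funpow_deriv_Suc funpow_0 id_apply d1 ..
      then show ?thesis using 1 SolD[of x] by simp
    next
      case 2
      have "(deriv ^^ Suc 1) (Sol m g) x = deriv (Sol1 m g) x" unfolding funpow_deriv_Suc deriv1_eq d1 ..
      also have "\<dots> = g x - (m-1) * tt m x * Sol1 m g x - m*(m+1)*(1 - tt m x^2) * Sol m g x"
        by (rule DERIV_imp_deriv[OF Sol1D])
      moreover have "(deriv ^^ 1) (Sol m g) = Sol1 m g" unfolding deriv1_eq d1 ..
      ultimately show ?thesis using 2 Sol1D[of x] by simp
    qed
  qed
  show ?case using a b by blast
next
  case (Suc j)
  then have j: "j < k - 2" by simp
  from Suc.IH j have IH1: "(deriv ^^ (j+2)) (Sol m g) = (\<lambda>s. (deriv ^^ j) g s - (\<Sum>i\<le>j+1. poly ((step m ^^ j) (C1 m) i) (tt m s) * (deriv ^^ i) (Sol m g) s))"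
    and IH2: "\<forall>i\<le>j+1. \<forall>x. ((deriv ^^ i) (Sol m g) has_real_derivative (deriv ^^ Suc i) (Sol m g) x) (at x)"
    by auto
  have supp: "\<forall>i>j+1. (step m ^^ j) (C1 m) i = 0" using steps_supp[OF C1_supp, of j m] by (simp add: add.commute)
  have D: "((deriv ^^ (j+2)) (Sol m g) has_real_derivative
      ((deriv ^^ Suc j) g x - (\<Sum>i\<le>Suc (j+1). poly (step m ((step m ^^ j) (C1 m)) i) (tt m x) * (deriv ^^ i) (Sol m g) x))) (at x)" for x
    unfolding IH1
    by (rule DERIV_diff[OF deriv_ok[OF Ck_g[OF g] j] rep_deriv[OF supp]]) (use IH2 in auto)
  have E: "(deriv ^^ Suc (j+2)) (Sol m g) x =
      (deriv ^^ Suc j) g x - (\<Sum>i\<le>Suc (j+1). poly (step m ((step m ^^ j) (C1 m)) i) (tt m x) * (deriv ^^ i) (Sol m g) x)" for x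
    using DERIV_imp_deriv[OF D[of x]] by simp
  have a: "(deriv ^^ (Suc j+2)) (Sol m g) = (\<lambda>s. (deriv ^^ Suc j) g s - (\<Sum>i\<le>Suc j+1. poly ((step m ^^ Suc j) (C1 m) i) (tt m s) * (deriv ^^ i) (Sol m g) s))"
  proof
    fix x show "(deriv ^^ (Suc j+2)) (Sol m g) x = (deriv ^^ Suc j) g x - (\<Sum>i\<le>Suc j+1. poly ((step m ^^ Suc j) (C1 m) i) (tt m x) * (deriv ^^ i) (Sol m g) x)"
      using E[of x] by simp
  qed
  have b: "\<forall>i\<le>Suc j+1. \<forall>x. ((deriv ^^ i) (Sol m g) has_real_derivative (deriv ^^ Suc i) (Sol m g) x) (at x)"
  proof (intro allI impI)
    fix i x assume i: "i \<le> Suc j + 1"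
    show "((deriv ^^ i) (Sol m g) has_real_derivative (deriv ^^ Suc i) (Sol m g) x) (at x)"
    proof (cases "i \<le> j + 1")
      case True then show ?thesis using IH2 by blast
    next
      case False
      then have "i = j + 2" using i by simp
      then show ?thesis using D[of x] E[of x] by simp
    qed
  qed
  show ?case using a b by blast
qed

end

end

context fixes n k :: nat and q :: real
  assumes n3: "n \<ge> 3" and k2: "k \<ge> 2" and q1: "- real (n - 2) < q" and q0: "q < 0"
begin

lemmas ctxL = n3 k2 q1 q0

context fixes g assumes g: "g \<in> Cspace n (k-2) q"
begin

lemmas bootg = boot[OF ctxL g]

lemma Sol_derivs: "i \<le> k - 1 \<Longrightarrow> ((deriv ^^ i) (Sol (real (n-1)) g) has_real_derivative (deriv ^^ Suc i) (Sol (real (n-1)) g) x) (at x)"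
  using bootg[of "k-2"] k2 by auto

lemma Sol_Ck: "Ck k (Sol (real (n-1)) g)"
  unfolding Ck_def
proof (intro conjI allI impI)
  fix a assume a: "a < k"
  have "\<And>x. (deriv ^^ a) (Sol (real (n-1)) g) differentiable at x"
    using Sol_derivs[of a] a real_differentiable_def by fastforce
  then show "(deriv ^^ a) (Sol (real (n-1)) g) differentiable_on UNIV" by (simp add: differentiable_at_imp_differentiable_on)
next
  have e: "(deriv ^^ k) (Sol (real (n-1)) g) = (\<lambda>s. (deriv ^^ (k-2)) g s - (\<Sum>i\<le>k-2+1. poly ((step (real (n-1)) ^^ (k-2)) (C1 (real (n-1))) i) (tt (real (n-1)) s) * (deriv ^^ i) (Sol (real (n-1)) g) s))"
  proof -
    have kk: "k - 2 + 2 = k" using k2 by simp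
    from conjunct1[OF bootg[OF order_refl]] show ?thesis unfolding kk .
  qed
  have c: "continuous_on UNIV ((deriv ^^ i) (Sol (real (n-1)) g))" if "i \<le> k - 2 + 1" for i
  proof -
    have "i \<le> k - 1" using that k2 by linarith
    then have "\<And>x. isCont ((deriv ^^ i) (Sol (real (n-1)) g)) x" using Sol_derivs DERIV_continuous by blast
    then show ?thesis by (simp add: continuous_at_imp_continuous_on)
  qed
  show "continuous_on UNIV ((deriv ^^ k) (Sol (real (n-1)) g))"
    unfolding e
  proof (intro continuous_on_diff continuous_on_sum continuous_on_mult)
    show "continuous_on UNIV ((deriv ^^ (k - 2)) g)" by (rule deriv_cont[OF Ck_g[OF ctxL g] order_refl])
    fix i assume "i \<in> {..k-2+1}"
    then show "continuous_on UNIV ((deriv ^^ i) (Sol (real (n-1)) g))" using c by auto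
    show "continuous_on UNIV (\<lambda>s. poly ((step (real (n-1)) ^^ (k-2)) (C1 (real (n-1))) i) (tt (real (n-1)) s))"
      by (rule continuous_on_compose2[OF continuous_on_poly[OF continuous_on_id] tt_cont]) auto
  qed
qed

lemma T0_Sol: "T0 n (Sol (real (n-1)) g) = g"
proof
  fix s
  have "(deriv ^^ 2) (Sol (real (n-1)) g) s = g s - (\<Sum>i\<le>1. poly (C1 (real (n-1)) i) (tt (real (n-1)) s) * (deriv ^^ i) (Sol (real (n-1)) g) s)"
    using d2[OF ctxL g] by (rule fun_cong)
  then show "T0 n (Sol (real (n-1)) g) s = g s"
    unfolding T0_eq[OF n3] C1_sum by simp
qed

end

end

lemma d2eq: "(deriv ^^ 2) F = deriv (deriv F)" by (simp add: numeral_2_eq_2)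

context fixes n k :: nat and q :: real
  assumes n3: "n \<ge> 3" and k2: "k \<ge> 2" and q1: "- real (n - 2) < q" and q0: "q < 0"
begin

lemmas ctxM = n3 k2 q1 q0

lemma f_bound:
  assumes f: "f \<in> Cspace n k' q"
  shows "\<bar>f x\<bar> \<le> (2 * Cnorm n k' q f) * exp (- (-q) * \<bar>x\<bar>)"
proof -
  have a: "\<bar>f x\<bar> * phi n x powr (-q) \<le> Cnorm n k' q f" using Cspace_bound[OF f, of 0 x] by simp
  have "\<bar>f x\<bar> * (exp (-q * \<bar>x\<bar>) / 2) \<le> \<bar>f x\<bar> * phi n x powr (-q)"
    by (rule mult_left_mono[OF w_lower[OF ctxM]]) simp
  with a have "\<bar>f x\<bar> * exp (-q * \<bar>x\<bar>) \<le> 2 * Cnorm n k' q f" by simp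
  then have "\<bar>f x\<bar> \<le> 2 * Cnorm n k' q f / exp (-q * \<bar>x\<bar>)" by (simp add: field_simps)
  also have "\<dots> = (2 * Cnorm n k' q f) * exp (- (-q) * \<bar>x\<bar>)" by (simp add: exp_minus field_simps)
  finally show ?thesis .
qed

lemma f_lim:
  assumes f: "f \<in> Cspace n k' q"
  shows "(f \<longlongrightarrow> 0) at_top" "((\<lambda>s. f (-s)) \<longlongrightarrow> 0) at_top"
proof -
  have e: "((\<lambda>s. (2 * Cnorm n k' q f) * exp (- (-q) * s)) \<longlongrightarrow> 0) at_top"
    using tendsto_mult_right_zero[OF exp_neg_lim[of "-q"]] q0 by simp
  show "(f \<longlongrightarrow> 0) at_top"
  proof (rule Lim_null_comparison[OF _ e])
    show "\<forall>\<^sub>F x in at_top. norm (f x) \<le> 2 * Cnorm n k' q f * exp (- (-q) * x)"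
      using eventually_ge_at_top[of 0]
    proof eventually_elim
      fix x :: real assume "x \<ge> 0"
      then show "norm (f x) \<le> 2 * Cnorm n k' q f * exp (- (-q) * x)" using f_bound[OF f, of x] by simp
    qed
  qed
  show "((\<lambda>s. f (-s)) \<longlongrightarrow> 0) at_top"
  proof (rule Lim_null_comparison[OF _ e])
    show "\<forall>\<^sub>F x in at_top. norm (f (-x)) \<le> 2 * Cnorm n k' q f * exp (- (-q) * x)"
      using eventually_ge_at_top[of 0]
    proof eventually_elim
      fix x :: real assume "x \<ge> 0"
      then show "norm (f (-x)) \<le> 2 * Cnorm n k' q f * exp (- (-q) * x)" using f_bound[OF f, of "-x"] by simp
    qed
  qed
qed

lemma T0_inj:
  assumes f1: "f1 \<in> Cspace n k q" and f2: "f2 \<in> Cspace n k q" and eq: "T0 n f1 = T0 n f2"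
  shows "f1 = f2"
proof -
  let ?m = "real (n-1)"
  have ck1: "Ck k f1" and ck2: "Ck k f2" using f1 f2 unfolding Cspace_def by auto
  have d0: "\<And>f s. Ck k f \<Longrightarrow> (f has_real_derivative deriv f s) (at s)"
    using deriv_ok[of k _ 0] k2 by simp
  have d1: "\<And>f s. Ck k f \<Longrightarrow> (deriv f has_real_derivative deriv (deriv f) s) (at s)"
    using deriv_ok[of k _ 1] k2 by simp
  let ?u = "\<lambda>s. f1 s - f2 s"
  let ?u1 = "\<lambda>s. deriv f1 s - deriv f2 s"
  let ?u2 = "\<lambda>s. deriv (deriv f1) s - deriv (deriv f2) s"
  have du: "(?u has_real_derivative ?u1 s) (at s)" for s by (intro DERIV_diff d0 ck1 ck2)
  have du1: "(?u1 has_real_derivative ?u2 s) (at s)" for s by (intro DERIV_diff d1 ck1 ck2)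
  have ode: "?u2 s + (?m-1) * tt ?m s * ?u1 s + ?m*(?m+1)*(1 - tt ?m s^2) * ?u s = 0" for s
  proof -
    have "T0 n f1 s = T0 n f2 s" using eq by simp
    then show ?thesis unfolding T0_eq[OF n3] by (simp add: d2eq algebra_simps)
  qed
  have l1: "(?u \<longlongrightarrow> 0) at_top" using tendsto_diff[OF f_lim(1)[OF f1] f_lim(1)[OF f2]] by simp
  have l2: "((\<lambda>s. ?u (-s)) \<longlongrightarrow> 0) at_top" using tendsto_diff[OF f_lim(2)[OF f1] f_lim(2)[OF f2]] by simp
  have "?u s = 0" for s by (rule uniq[OF m1[OF ctxM] du du1 ode l1 l2])
  then show ?thesis by auto
qed

end

context fixes n k :: nat and q :: real
  assumes n3: "n \<ge> 3" and k2: "k \<ge> 2" and q1: "- real (n - 2) < q" and q0: "q < 0"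
begin

lemmas ctxN = n3 k2 q1 q0

lemma exp_cancel: "exp (- (-q) * \<bar>s\<bar>) * exp (-q * \<bar>s\<bar>) = 1"
  by (simp add: mult_exp_exp)

lemma bnd_aux:
  assumes "\<bar>X\<bar> \<le> Y * exp (- (-q) * \<bar>s\<bar>)"
  shows "\<bar>X\<bar> * phi n s powr (-q) \<le> Y"
proof -
  have "\<bar>X\<bar> * phi n s powr (-q) \<le> (Y * exp (- (-q) * \<bar>s\<bar>)) * exp (-q * \<bar>s\<bar>)"
    by (rule mult_mono[OF assms w_upper[OF ctxN]]) (use assms in \<open>auto intro: order_trans[OF abs_ge_zero]\<close>)
  also have "\<dots> = Y" using exp_cancel by (simp add: mult.assoc)
  finally show ?thesis .
qed

lemma deriv_bounds:
  "i \<le> k \<Longrightarrow> \<exists>D. \<forall>g\<in>Cspace n (k-2) q. \<forall>s.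
     \<bar>(deriv ^^ i) (Sol (real (n-1)) g) s\<bar> * phi n s powr (-q) \<le> D * Cnorm n (k-2) q g"
proof (induction i rule: less_induct)
  case (less i)
  let ?m = "real (n-1)"
  consider "i = 0" | "i = 1" | j where "i = j + 2"
  proof -
    have "i = 0 \<or> i = 1 \<or> (\<exists>j. i = j + 2)" by presburger
    then show thesis using that by blast
  qed
  then show ?case
  proof cases
    case 1
    show ?thesis
    proof (intro exI ballI allI)
      fix g s assume g: "g \<in> Cspace n (k-2) q"
      have "\<bar>Sol ?m g s\<bar> \<le> ((2 * KH ?m * KB ?m (-q) / (?m * TT ?m)) * 2) * Cnorm n (k-2) q g * exp (- (-q) * \<bar>s\<bar>)"
        using SolB[OF ctxN g, of s] by (simp add: mult.assoc)
      from bnd_aux[OF this] show "\<bar>(deriv ^^ i) (Sol ?m g) s\<bar> * phi n s powr (-q) \<le> ((2 * KH ?m * KB ?m (-q) / (?m * TT ?m)) * 2) * Cnorm n (k-2) q g"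
        using 1 by simp
    qed
  next
    case 2
    show ?thesis
    proof (intro exI ballI allI)
      fix g s assume g: "g \<in> Cspace n (k-2) q"
      have "\<bar>Sol1 ?m g s\<bar> \<le> ((2 * ?m * KH ?m * KB ?m (-q) / (?m * TT ?m)) * 2) * Cnorm n (k-2) q g * exp (- (-q) * \<bar>s\<bar>)"
        using Sol1B[OF ctxN g, of s] by (simp add: mult.assoc)
      from bnd_aux[OF this] have "\<bar>Sol1 ?m g s\<bar> * phi n s powr (-q) \<le> ((2 * ?m * KH ?m * KB ?m (-q) / (?m * TT ?m)) * 2) * Cnorm n (k-2) q g" .
      moreover have "(deriv ^^ i) (Sol ?m g) = Sol1 ?m g" unfolding 2 deriv1_eq[OF ctxN] d1[OF ctxN g] ..
      ultimately show "\<bar>(deriv ^^ i) (Sol ?m g) s\<bar> * phi n s powr (-q) \<le> ((2 * ?m * KH ?m * KB ?m (-q) / (?m * TT ?m)) * 2) * Cnorm n (k-2) q g"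
        by simp
    qed
  next
    case 3
    then have j: "j \<le> k - 2" using less.prems by simp
    have "\<forall>i'\<in>{..<i}. \<exists>D. \<forall>g\<in>Cspace n (k-2) q. \<forall>s. \<bar>(deriv ^^ i') (Sol ?m g) s\<bar> * phi n s powr (-q) \<le> D * Cnorm n (k-2) q g"
      using less.IH less.prems by auto
    from bchoice[OF this] obtain Df where Df0: "\<forall>i'\<in>{..<i}. \<forall>g\<in>Cspace n (k-2) q. \<forall>s. \<bar>(deriv ^^ i') (Sol ?m g) s\<bar> * phi n s powr (-q) \<le> Df i' * Cnorm n (k-2) q g"
      by blast
    have Df: "\<And>i' g s. i' < i \<Longrightarrow> g \<in> Cspace n (k-2) q \<Longrightarrow> \<bar>(deriv ^^ i') (Sol ?m g) s\<bar> * phi n s powr (-q) \<le> Df i' * Cnorm n (k-2) q g"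
      using Df0 by simp
    let ?P = "\<Sum>i'\<le>j+1. pb ((step ?m ^^ j) (C1 ?m) i')"
    let ?S = "\<Sum>i'\<le>j+1. \<bar>Df i'\<bar>"
    show ?thesis
    proof (intro exI ballI allI)
      fix g s assume g: "g \<in> Cspace n (k-2) q"
      let ?c = "Cnorm n (k-2) q g"
      have c0: "?c \<ge> 0" by (rule Cnorm_nonneg[OF g])
      let ?w = "phi n s powr (-q)"
      have form: "(deriv ^^ i) (Sol ?m g) s = (deriv ^^ j) g s - (\<Sum>i'\<le>j+1. poly ((step ?m ^^ j) (C1 ?m) i') (tt ?m s) * (deriv ^^ i') (Sol ?m g) s)"
        using conjunct1[OF boot[OF ctxN g j]] 3 by simp
      have hi: "\<bar>(deriv ^^ i') (Sol ?m g) s\<bar> * ?w \<le> ?S * ?c" if i': "i' \<le> j+1" for i'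
      proof -
        have "\<bar>(deriv ^^ i') (Sol ?m g) s\<bar> * ?w \<le> Df i' * ?c" using Df[OF _ g] i' 3 by simp
        also have "\<dots> \<le> \<bar>Df i'\<bar> * ?c" by (rule mult_right_mono[OF abs_ge_self c0])
        also have "\<dots> \<le> ?S * ?c"
          by (rule mult_right_mono[OF member_le_sum[of i' "{..j+1}" "\<lambda>i'. \<bar>Df i'\<bar>"] c0]) (use i' in auto)
        finally show ?thesis .
      qed
      have t1: "\<bar>(deriv ^^ j) g s\<bar> * ?w \<le> ?c" by (rule Cspace_bound[OF g j])
      have t2: "\<bar>\<Sum>i'\<le>j+1. poly ((step ?m ^^ j) (C1 ?m) i') (tt ?m s) * (deriv ^^ i') (Sol ?m g) s\<bar> * ?w \<le> ?P * (?S * ?c)"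
        by (rule rep_bound[OF hi weight_nonneg])
      have "\<bar>(deriv ^^ i) (Sol ?m g) s\<bar> * ?w \<le> (\<bar>(deriv ^^ j) g s\<bar> + \<bar>\<Sum>i'\<le>j+1. poly ((step ?m ^^ j) (C1 ?m) i') (tt ?m s) * (deriv ^^ i') (Sol ?m g) s\<bar>) * ?w"
        unfolding form by (rule mult_right_mono[OF abs_triangle_ineq4 weight_nonneg])
      also have "\<dots> \<le> ?c + ?P * (?S * ?c)" using t1 t2 by (simp add: distrib_right)
      also have "\<dots> = (1 + ?P * ?S) * ?c" by (simp add: algebra_simps)
      finally show "\<bar>(deriv ^^ i) (Sol ?m g) s\<bar> * ?w \<le> (1 + ?P * ?S) * ?c" .
    qed
  qed
qed

end

theorem lemma4p3:
  fixes n k :: nat and q :: real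
  assumes "n \<ge> 3" and "k \<ge> 2" and "- real (n - 2) < q" and "q < 0"
  shows "(\<forall>f\<in>Cspace n k q. T0 n f \<in> Cspace n (k - 2) q)
    \<and> bij_betw (T0 n) (Cspace n k q) (Cspace n (k - 2) q)
    \<and> (\<exists>C. \<forall>f\<in>Cspace n k q. Cnorm n (k - 2) q (T0 n f) \<le> C * Cnorm n k q f)
    \<and> (\<exists>C. \<forall>g\<in>Cspace n (k - 2) q.
           Cnorm n k q (inv_into (Cspace n k q) (T0 n) g) \<le> C * Cnorm n (k - 2) q g)"
proof -
  note ctxO = assms
  let ?m = "real (n-1)"
  have fw: "\<forall>f\<in>Cspace n k q. T0 n f \<in> Cspace n (k - 2) q"
    using T0_forward(1)[OF assms(1,2)] by blast
  have inj: "inj_on (T0 n) (Cspace n k q)"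
    by (rule inj_onI) (rule T0_inj[OF ctxO])
  have "\<forall>a\<in>{..k}. \<exists>D. \<forall>g\<in>Cspace n (k-2) q. \<forall>s.
     \<bar>(deriv ^^ a) (Sol ?m g) s\<bar> * phi n s powr (-q) \<le> D * Cnorm n (k-2) q g"
    using deriv_bounds[OF ctxO] by blast
  from bchoice[OF this] obtain Dv where Dv: "\<forall>a\<in>{..k}. \<forall>g\<in>Cspace n (k-2) q. \<forall>s.
     \<bar>(deriv ^^ a) (Sol ?m g) s\<bar> * phi n s powr (-q) \<le> Dv a * Cnorm n (k-2) q g" by blast
  have Sol_in: "Sol ?m g \<in> Cspace n k q" if g: "g \<in> Cspace n (k-2) q" for g
  proof -
    have "bdd_above (range (\<lambda>s. \<bar>(deriv ^^ a) (Sol ?m g) s\<bar> * phi n s powr (-q)))" if a: "a \<le> k" for a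
      using Dv g a by (intro bdd_aboveI2) auto
    then show ?thesis unfolding Cspace_def using Sol_Ck[OF ctxO g] by blast
  qed
  have img: "T0 n ` Cspace n k q = Cspace n (k - 2) q"
  proof
    show "T0 n ` Cspace n k q \<subseteq> Cspace n (k - 2) q" using fw by blast
    show "Cspace n (k - 2) q \<subseteq> T0 n ` Cspace n k q"
    proof
      fix g assume g: "g \<in> Cspace n (k - 2) q"
      then have "g = T0 n (Sol ?m g)" using T0_Sol[OF ctxO g] by simp
      then show "g \<in> T0 n ` Cspace n k q" using Sol_in[OF g] by blast
    qed
  qed
  have bij: "bij_betw (T0 n) (Cspace n k q) (Cspace n (k - 2) q)"
    unfolding bij_betw_def using inj img by blast
  have c1: "\<exists>C. \<forall>f\<in>Cspace n k q. Cnorm n (k - 2) q (T0 n f) \<le> C * Cnorm n k q f"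
    using T0_forward(2)[OF assms(1,2)] by blast
  have c2: "\<forall>g\<in>Cspace n (k - 2) q.
           Cnorm n k q (inv_into (Cspace n k q) (T0 n) g) \<le> (\<Sum>a\<le>k. Dv a) * Cnorm n (k - 2) q g"
  proof
    fix g assume g: "g \<in> Cspace n (k - 2) q"
    have iv: "inv_into (Cspace n k q) (T0 n) g = Sol ?m g"
      using inj Sol_in[OF g] T0_Sol[OF ctxO g] by (intro inv_into_f_eq) auto
    have "Cnorm n k q (Sol ?m g) \<le> (\<Sum>a\<le>k. Dv a * Cnorm n (k - 2) q g)"
      unfolding Cnorm_def[of n k q] by (intro sum_mono cSUP_least) (use Dv g in auto)
    then show "Cnorm n k q (inv_into (Cspace n k q) (T0 n) g) \<le> (\<Sum>a\<le>k. Dv a) * Cnorm n (k - 2) q g"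
      unfolding iv by (simp add: sum_distrib_right)
  qed
  show ?thesis using fw bij c1 c2 by blast
qed

end
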